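(* Let $w\in W_0^J$ and $\beta\in\Delta_0^+\setminus\Delta_J^+$ be such that there is an edge $\lfloor wr_\beta\rfloor\xleftarrow{\beta}w$ in the parabolic quantum Bruhat graph. Let $z\in W_J$ be such that $r_\theta w=\lfloor r_\theta w\rfloor z$ (note $z\beta\in\Delta_0^+\setminus\Delta_J^+$). (1) If $\langle w\Lambda,\alpha_0^\vee\rangle>0$ and $w\beta\ne\pm\theta$, then $\langle wr_\beta\Lambda,\alpha_0^\vee\rangle>0$ and there is an edge $\lfloor r_\theta wr_\beta\rfloor\xleftarrow{z\beta}\lfloor r_\theta w\rfloor$. (2) If $\langle wr_\beta\Lambda,\alpha_0^\vee\rangle<0$ and $w\beta\ne\pm\theta$, then $\langle w\Lambda,\alpha_0^\vee\rangle<0$ and there is an edge $\lfloor r_\theta wr_\beta\rfloor\xleftarrow{z\beta}\lfloor r_\theta w\rfloor$. (3) If $\langle wr_\beta\Lambda,\alpha_0^\vee\rangle<0$ and $\langle w\Lambda,\alpha_0^\vee\rangle\ge0$, then $w\beta=\pm\theta$. (4) If $\langle wr_\beta\Lambda,\alpha_0^\vee\rangle\le0$ and $\langle w\Lambda,\alpha_0^\vee\rangle>0$, then $w\beta=\pm\theta$.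
   Context: Let $\mathfrak{g}$ be an untwisted affine Lie algebra with index set $I$, distinguished node $0$, $I_0=I\setminus\{0\}$, simple roots $\alpha_j$ and coroots $\alpha_j^\vee$, null root $\delta$, canonical central element $c$. Let $\Delta_0$ be the finite root system (indexed by $I_0$) with positive roots $\Delta_0^+$, negative roots $\Delta_0^-$, highest root $\theta$, Weyl group $W_0$ generated by $r_j$ ($j\in I_0$); $r_\theta$ is the reflection in $\theta$; $\alpha_0^\vee=-\theta^\vee+c$. Let $\lambda=\sum_{i\in I_0}m_i\varpi_i$ ($m_i\in\mathbb{Z}_{\ge0}$, $\varpi_i=\Lambda_i-a_i^\vee\Lambda_0$ the level-zero fundamental weights) and $\Lambda=\mathrm{cl}(\lambda)$ its image modulo $\mathbb{C}\delta$; since $\Lambda$ has level zero, $\langle\mu,\alpha_0^\vee\rangle=-\langle\mu,\theta^\vee\rangle$ for $\mu\in W_0\Lambda$. Let $J=\{j\in I_0\mid\langle\Lambda,\alpha_j^\vee\rangle=0\}$, $W_J=\langle r_j\mid j\in J\rangle$, $\Delta_J^+=\Delta_0^+\cap\bigoplus_{j\in J}\mathbb{Z}\alpha_j$, $W_0^J$ the minimal-length representatives of $W_0/W_J$, $\lfloor w\rfloor\in W_0^J$ the representative of $wW_J$, $\ell$ the length, $\rho=\frac12\sum_{\alpha\in\Delta_0^+}\alpha$, $\rho_J=\frac12\sum_{\alpha\in\Delta_J^+}\alpha$. The parabolic quantum Bruhat graph has vertex set $W_0^J$ and a directed edge $\lfloor wr_\beta\rfloor\xleftarrow{\beta}w$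 for $w\in W_0^J$, $\beta\in\Delta_0^+\setminus\Delta_J^+$, whenever either $\ell(\lfloor wr_\beta\rfloor)=\ell(w)+1$ or $\ell(\lfloor wr_\beta\rfloor)=\ell(w)-2\langle\rho-\rho_J,\beta^\vee\rangle+1$. *)

theory Defs
  imports "HOL-Analysis.Analysis"
begin

definition coroot_pair :: "'a::euclidean_space \<Rightarrow> 'a \<Rightarrow> real" where
  "coroot_pair \<mu> \<beta> = 2 * (\<mu> \<bullet> \<beta>) / (\<beta> \<bullet> \<beta>)"

definition refl :: "'a::euclidean_space \<Rightarrow> 'a \<Rightarrow> 'a" where
  "refl \<beta> x = x - coroot_pair x \<beta> *\<^sub>R \<beta>"

definition root_system :: "'a::euclidean_space set \<Rightarrow> bool" where
  "root_system R \<longleftrightarrow> finite R \<and> 0 \<notin> R \<and> span R = UNIV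
     \<and> (\<forall>a\<in>R. \<forall>b\<in>R. refl a b \<in> R)
     \<and> (\<forall>a\<in>R. \<forall>b\<in>R. coroot_pair b a \<in> \<int>)
     \<and> (\<forall>a\<in>R. \<forall>c. c *\<^sub>R a \<in> R \<longrightarrow> c = 1 \<or> c = -1)"

definition irreducible_rs :: "'a::euclidean_space set \<Rightarrow> bool" where
  "irreducible_rs R \<longleftrightarrow> \<not> (\<exists>A B. A \<union> B = R \<and> A \<inter> B = {} \<and> A \<noteq> {} \<and> B \<noteq> {}
       \<and> (\<forall>a\<in>A. \<forall>b\<in>B. a \<bullet> b = 0))"

definition rcomb :: "'i set \<Rightarrow> ('i \<Rightarrow> 'a::euclidean_space) \<Rightarrow> ('i \<Rightarrow> int) \<Rightarrow> 'a" where
  "rcomb I \<alpha> c = (\<Sum>i\<in>I. of_int (c i) *\<^sub>R \<alpha> i)"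

definition simple_system :: "'a::euclidean_space set \<Rightarrow> 'i set \<Rightarrow> ('i \<Rightarrow> 'a) \<Rightarrow> bool" where
  "simple_system R I \<alpha> \<longleftrightarrow> finite I \<and> inj_on \<alpha> I \<and> \<alpha> ` I \<subseteq> R \<and> independent (\<alpha> ` I)
     \<and> (\<forall>b\<in>R. \<exists>c. ((\<forall>i\<in>I. 0 \<le> c i) \<or> (\<forall>i\<in>I. c i \<le> 0)) \<and> b = rcomb I \<alpha> c)"

definition pos_roots :: "'a::euclidean_space set \<Rightarrow> 'i set \<Rightarrow> ('i \<Rightarrow> 'a) \<Rightarrow> 'a set" where
  "pos_roots R I \<alpha> = {b\<in>R. \<exists>c. (\<forall>i\<in>I. 0 \<le> c i) \<and> b = rcomb I \<alpha> c}"

definition pos_roots_J :: "'a::euclidean_space set \<Rightarrow> 'i set \<Rightarrow> ('i \<Rightarrow> 'a) \<Rightarrow> 'i set \<Rightarrow> 'a set" where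
  "pos_roots_J R I \<alpha> J = {b\<in>pos_roots R I \<alpha>. \<exists>c. (\<forall>i\<in>I - J. c i = 0) \<and> b = rcomb I \<alpha> c}"

definition highest_root :: "'a::euclidean_space set \<Rightarrow> 'i set \<Rightarrow> ('i \<Rightarrow> 'a) \<Rightarrow> 'a \<Rightarrow> bool" where
  "highest_root R I \<alpha> \<theta> \<longleftrightarrow> \<theta> \<in> R \<and>
     (\<forall>b\<in>R. \<exists>c. (\<forall>i\<in>I. 0 \<le> c i) \<and> \<theta> - b = rcomb I \<alpha> c)"

definition wprod :: "('i \<Rightarrow> 'a::euclidean_space) \<Rightarrow> 'i list \<Rightarrow> 'a \<Rightarrow> 'a" where
  "wprod \<alpha> is = foldr (\<lambda>i f. refl (\<alpha> i) \<circ> f) is id"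

definition weyl_sub :: "('i \<Rightarrow> 'a::euclidean_space) \<Rightarrow> 'i set \<Rightarrow> ('a \<Rightarrow> 'a) set" where
  "weyl_sub \<alpha> K = {wprod \<alpha> is | is. set is \<subseteq> K}"

definition wlen :: "('i \<Rightarrow> 'a::euclidean_space) \<Rightarrow> 'i set \<Rightarrow> ('a \<Rightarrow> 'a) \<Rightarrow> nat" where
  "wlen \<alpha> I w = (LEAST n. \<exists>is. set is \<subseteq> I \<and> length is = n \<and> wprod \<alpha> is = w)"

definition min_reps :: "('i \<Rightarrow> 'a::euclidean_space) \<Rightarrow> 'i set \<Rightarrow> 'i set \<Rightarrow> ('a \<Rightarrow> 'a) set" where
  "min_reps \<alpha> I J = {w \<in> weyl_sub \<alpha> I. \<forall>v\<in>weyl_sub \<alpha> J. wlen \<alpha> I w \<le> wlen \<alpha> I (w \<circ> v)}"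

definition wfloor :: "('i \<Rightarrow> 'a::euclidean_space) \<Rightarrow> 'i set \<Rightarrow> 'i set \<Rightarrow> ('a \<Rightarrow> 'a) \<Rightarrow> ('a \<Rightarrow> 'a)" where
  "wfloor \<alpha> I J w = (THE u. u \<in> min_reps \<alpha> I J \<and> (\<exists>v\<in>weyl_sub \<alpha> J. u = w \<circ> v))"

definition rho :: "'a::euclidean_space set \<Rightarrow> 'i set \<Rightarrow> ('i \<Rightarrow> 'a) \<Rightarrow> 'a" where
  "rho R I \<alpha> = (1/2) *\<^sub>R (\<Sum>b\<in>pos_roots R I \<alpha>. b)"

definition rho_J :: "'a::euclidean_space set \<Rightarrow> 'i set \<Rightarrow> ('i \<Rightarrow> 'a) \<Rightarrow> 'i set \<Rightarrow> 'a" where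
  "rho_J R I \<alpha> J = (1/2) *\<^sub>R (\<Sum>b\<in>pos_roots_J R I \<alpha> J. b)"

definition qbg_edge :: "'a::euclidean_space set \<Rightarrow> 'i set \<Rightarrow> ('i \<Rightarrow> 'a) \<Rightarrow> 'i set
    \<Rightarrow> ('a \<Rightarrow> 'a) \<Rightarrow> 'a \<Rightarrow> ('a \<Rightarrow> 'a) \<Rightarrow> bool" where
  "qbg_edge R I \<alpha> J w b u \<longleftrightarrow>
     w \<in> min_reps \<alpha> I J \<and> b \<in> pos_roots R I \<alpha> - pos_roots_J R I \<alpha> J
     \<and> u = wfloor \<alpha> I J (w \<circ> refl b)
     \<and> (wlen \<alpha> I u = wlen \<alpha> I w + 1
        \<or> real (wlen \<alpha> I u) = real (wlen \<alpha> I w)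
             - 2 * coroot_pair (rho R I \<alpha> - rho_J R I \<alpha> J) b + 1)"

(* <mu, alpha_0^vee> = - <mu, theta^vee> for level-zero mu *)
definition alpha0_pair :: "'a::euclidean_space \<Rightarrow> 'a \<Rightarrow> real" where
  "alpha0_pair \<theta> \<mu> = - coroot_pair \<mu> \<theta>"

end

theory Submission
  imports Defs
begin

definition orth :: "('a::euclidean_space \<Rightarrow> 'a) \<Rightarrow> bool" where
  "orth f \<longleftrightarrow> linear f \<and> (\<forall>x y. f x \<bullet> f y = x \<bullet> y)"

lemma cp_add: "coroot_pair (x+y) b = coroot_pair x b + coroot_pair y b"
  by (simp add: coroot_pair_def inner_add_left add_divide_distrib)
lemma cp_diff: "coroot_pair (x-y) b = coroot_pair x b - coroot_pair y b"
  by (simp add: coroot_pair_def inner_diff_left diff_divide_distrib)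
lemma cp_scale: "coroot_pair (c *\<^sub>R x) b = c * coroot_pair x b"
  by (simp add: coroot_pair_def)
lemma cp_uminus: "coroot_pair (-x) b = - coroot_pair x b"
  by (simp add: coroot_pair_def)
lemma cp_uminus2: "coroot_pair x (-b) = - coroot_pair x b"
  by (simp add: coroot_pair_def)
lemma cp_sum: "coroot_pair (\<Sum>x\<in>S. f x) b = (\<Sum>x\<in>S. coroot_pair (f x) b)"
  by (simp add: coroot_pair_def inner_sum_left sum_divide_distrib sum_distrib_left)
lemma cp_self: "b \<noteq> 0 \<Longrightarrow> coroot_pair b b = 2"
  by (simp add: coroot_pair_def)
lemma cp_zero: "coroot_pair 0 b = 0"
  by (simp add: coroot_pair_def)
lemma cp_sign: "b \<noteq> 0 \<Longrightarrow> (coroot_pair x b > 0 \<longleftrightarrow> x \<bullet> b > 0) \<and> (coroot_pair x b < 0 \<longleftrightarrow> x \<bullet> b < 0)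
   \<and> (coroot_pair x b = 0 \<longleftrightarrow> x \<bullet> b = 0)"
proof -
  assume "b \<noteq> 0" then have "b \<bullet> b > 0" by simp
  then show ?thesis by (auto simp: coroot_pair_def zero_less_divide_iff divide_less_0_iff; smt (verit) inner_ge_zero)
qed

lemma refl_self: "b \<noteq> 0 \<Longrightarrow> refl b b = -b"
  by (simp add: refl_def cp_self scaleR_2 algebra_simps)
lemma refl_linear: "linear (refl b)"
  unfolding refl_def
  by (rule linearI) (auto simp: cp_add cp_scale algebra_simps)
lemma refl_inner: "b \<noteq> 0 \<Longrightarrow> refl b x \<bullet> refl b y = x \<bullet> y"
  by (simp add: refl_def coroot_pair_def inner_diff_left inner_diff_right algebra_simps inner_commute)
lemma refl_refl: "b \<noteq> 0 \<Longrightarrow> refl b (refl b x) = x"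
  by (simp add: refl_def cp_diff cp_scale cp_self algebra_simps)
lemma refl_uminus: "refl (-b) = refl b"
  by (rule ext) (simp add: refl_def cp_uminus2)
lemma orth_refl: "b \<noteq> 0 \<Longrightarrow> orth (refl b)"
  by (simp add: orth_def refl_linear refl_inner)
lemma orth_comp: "orth f \<Longrightarrow> orth g \<Longrightarrow> orth (f \<circ> g)"
  by (simp add: orth_def linear_compose)
lemma orth_id: "orth id"
  by (simp add: orth_def linear_id)
lemma orth_linear: "orth f \<Longrightarrow> linear f" by (simp add: orth_def)
lemma orth_inner: "orth f \<Longrightarrow> f x \<bullet> f y = x \<bullet> y" by (simp add: orth_def)
lemma orth_cp: "orth f \<Longrightarrow> coroot_pair (f x) (f b) = coroot_pair x b"
  by (simp add: orth_def coroot_pair_def)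
lemma orth_diff: "orth f \<Longrightarrow> f (x - y) = f x - f y"
  by (simp add: orth_def linear_diff)
lemma orth_add: "orth f \<Longrightarrow> f (x + y) = f x + f y"
  by (simp add: orth_def linear_add)
lemma orth_scale: "orth f \<Longrightarrow> f (c *\<^sub>R x) = c *\<^sub>R f x"
  by (simp add: orth_def linear_scale)
lemma orth_uminus: "orth f \<Longrightarrow> f (- x) = - f x"
  by (simp add: orth_def linear_neg)
lemma orth_sum: "orth f \<Longrightarrow> f (\<Sum>x\<in>S. g x) = (\<Sum>x\<in>S. f (g x))"
  by (simp add: orth_def linear_sum)
lemma orth_zero_iff: "orth f \<Longrightarrow> f x = 0 \<longleftrightarrow> x = 0"
proof -
  assume o: "orth f"
  have "f x \<bullet> f x = x \<bullet> x" using o by (simp add: orth_def)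
  then show ?thesis by (metis inner_eq_zero_iff)
qed
lemma orth_inj: "orth f \<Longrightarrow> inj f"
  by (metis injI orth_diff orth_zero_iff right_minus_eq)
lemma orth_conj: "orth f \<Longrightarrow> f (refl b x) = refl (f b) (f x)"
  by (simp add: refl_def orth_diff orth_scale orth_cp)
lemma refl_inner_swap: "b \<noteq> 0 \<Longrightarrow> refl b x \<bullet> y = x \<bullet> refl b y"
  by (metis refl_inner refl_refl)

lemma wprod_Nil: "wprod \<alpha> [] = id" by (simp add: wprod_def)
lemma wprod_Cons: "wprod \<alpha> (i # is) = refl (\<alpha> i) \<circ> wprod \<alpha> is" by (simp add: wprod_def)
lemma wprod_append: "wprod \<alpha> (xs @ ys) = wprod \<alpha> xs \<circ> wprod \<alpha> ys"
  by (induct xs) (simp_all add: wprod_Nil wprod_Cons comp_assoc)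
lemma wprod_snoc: "wprod \<alpha> (xs @ [j]) = wprod \<alpha> xs \<circ> refl (\<alpha> j)"
  by (simp add: wprod_append wprod_Cons wprod_Nil)

locale rsys =
  fixes R :: "'a::euclidean_space set" and I0 :: "'i set" and \<alpha> :: "'i \<Rightarrow> 'a"
  assumes rs: "root_system R" and simple: "simple_system R I0 \<alpha>"
begin

lemma finR: "finite R" and zR: "0 \<notin> R" and reflR: "a\<in>R \<Longrightarrow> b\<in>R \<Longrightarrow> refl a b \<in> R"
  and cpZ: "a\<in>R \<Longrightarrow> b\<in>R \<Longrightarrow> coroot_pair b a \<in> \<int>"
  and reduced: "a\<in>R \<Longrightarrow> c *\<^sub>R a \<in> R \<Longrightarrow> c = 1 \<or> c = -1"
  using rs unfolding root_system_def by auto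

lemma nz: "a \<in> R \<Longrightarrow> a \<noteq> 0" using zR by auto
lemma negR: "a\<in>R \<Longrightarrow> -a \<in> R" by (metis reflR refl_self nz)

lemma finI: "finite I0" and inja: "inj_on \<alpha> I0" and aR: "i\<in>I0 \<Longrightarrow> \<alpha> i \<in> R"
  and indep: "independent (\<alpha> ` I0)"
  and expand: "b\<in>R \<Longrightarrow> \<exists>c. ((\<forall>i\<in>I0. 0 \<le> c i) \<or> (\<forall>i\<in>I0. c i \<le> 0)) \<and> b = rcomb I0 \<alpha> c"
  using simple unfolding simple_system_def by auto

lemma anz: "i\<in>I0 \<Longrightarrow> \<alpha> i \<noteq> 0" using aR nz by auto

lemma rcomb_add: "rcomb I0 \<alpha> c + rcomb I0 \<alpha> d = rcomb I0 \<alpha> (\<lambda>i. c i + d i)"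
  by (simp add: rcomb_def scaleR_add_left sum.distrib)
lemma rcomb_uminus: "- rcomb I0 \<alpha> c = rcomb I0 \<alpha> (\<lambda>i. - c i)"
  by (simp add: rcomb_def sum_negf)
lemma rcomb_diff: "rcomb I0 \<alpha> c - rcomb I0 \<alpha> d = rcomb I0 \<alpha> (\<lambda>i. c i - d i)"
  by (simp add: rcomb_def scaleR_diff_left sum_subtractf)
lemma rcomb_scale: "of_int t *\<^sub>R rcomb I0 \<alpha> c = rcomb I0 \<alpha> (\<lambda>i. t * c i)"
  by (simp add: rcomb_def scaleR_sum_right)
lemma rcomb_single: "i\<in>I0 \<Longrightarrow> rcomb I0 \<alpha> (\<lambda>j. if j = i then a else 0) = of_int a *\<^sub>R \<alpha> i"
proof -
  assume i: "i\<in>I0"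
  have "(\<lambda>j. real_of_int (if j = i then a else 0) *\<^sub>R \<alpha> j) = (\<lambda>j. if j = i then real_of_int a *\<^sub>R \<alpha> j else 0)"
    by auto
  have "(\<Sum>j\<in>I0. real_of_int (if j = i then a else 0) *\<^sub>R \<alpha> j) = (\<Sum>j\<in>I0. if j = i then real_of_int a *\<^sub>R \<alpha> j else 0)"
    by (rule sum.cong) auto
  also have "\<dots> = real_of_int a *\<^sub>R \<alpha> i" using finI i by (simp add: sum.delta)
  finally show ?thesis unfolding rcomb_def .
qed
lemma rcomb_cong: "(\<And>i. i\<in>I0 \<Longrightarrow> c i = d i) \<Longrightarrow> rcomb I0 \<alpha> c = rcomb I0 \<alpha> d"
  by (simp add: rcomb_def)

lemma rcomb_zero: assumes h: "rcomb I0 \<alpha> c = 0" "i\<in>I0" shows "c i = 0"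
proof -
  let ?u = "\<lambda>v. real_of_int (c (inv_into I0 \<alpha> v))"
  have "(\<Sum>v\<in>\<alpha>`I0. ?u v *\<^sub>R v) = (\<Sum>j\<in>I0. ?u (\<alpha> j) *\<^sub>R \<alpha> j)"
    using sum.reindex[OF inja, of "\<lambda>v. ?u v *\<^sub>R v"] by simp
  also have "\<dots> = rcomb I0 \<alpha> c" by (simp add: rcomb_def inv_into_f_f[OF inja])
  finally have "(\<Sum>v\<in>\<alpha>`I0. ?u v *\<^sub>R v) = 0" using h by simp
  then have "?u (\<alpha> i) = 0"
    using real_vector.independentD[OF indep finite_imageI[OF finI] order_refl, of ?u "\<alpha> i"] h(2) by blast
  then show ?thesis using inv_into_f_f[OF inja h(2)] by simp
qed

lemma rcomb_unique: "rcomb I0 \<alpha> c = rcomb I0 \<alpha> d \<Longrightarrow> i\<in>I0 \<Longrightarrow> c i = d i"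
  using rcomb_zero[of "\<lambda>i. c i - d i" i] rcomb_diff[of c d] by simp

definition ge0 :: "'a \<Rightarrow> bool" where
  "ge0 v \<longleftrightarrow> (\<exists>c. (\<forall>i\<in>I0. 0 \<le> c i) \<and> v = rcomb I0 \<alpha> c)"

abbreviation pos where "pos \<equiv> pos_roots R I0 \<alpha>"

lemma pos_iff: "b \<in> pos \<longleftrightarrow> b \<in> R \<and> ge0 b"
  by (simp add: pos_roots_def ge0_def)

lemma ge0_add: "ge0 a \<Longrightarrow> ge0 b \<Longrightarrow> ge0 (a + b)"
proof -
  assume "ge0 a" "ge0 b"
  then obtain c d where "\<forall>i\<in>I0. 0 \<le> c i" "a = rcomb I0 \<alpha> c" "\<forall>i\<in>I0. 0 \<le> d i" "b = rcomb I0 \<alpha> d"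
    unfolding ge0_def by blast
  then show ?thesis unfolding ge0_def by (intro exI[of _ "\<lambda>i. c i + d i"]) (simp add: rcomb_add)
qed
lemma ge0_scale: "ge0 a \<Longrightarrow> 0 \<le> t \<Longrightarrow> ge0 (of_int t *\<^sub>R a)"
proof -
  assume "ge0 a" "0 \<le> t"
  then obtain c where "\<forall>i\<in>I0. 0 \<le> c i" "a = rcomb I0 \<alpha> c"
    unfolding ge0_def by blast
  then show ?thesis unfolding ge0_def using \<open>0 \<le> t\<close> by (intro exI[of _ "\<lambda>i. t * c i"]) (simp add: rcomb_scale)
qed
lemma ge0_antisym: assumes "ge0 a" "ge0 (-a)" shows "a = 0"
proof -
  obtain c d where c: "\<forall>i\<in>I0. 0 \<le> c i" "a = rcomb I0 \<alpha> c" and d: "\<forall>i\<in>I0. 0 \<le> d i" "-a = rcomb I0 \<alpha> d"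
    using assms unfolding ge0_def by blast
  have "rcomb I0 \<alpha> c = - (- a)" using c by simp
  also have "\<dots> = - rcomb I0 \<alpha> d" using d by simp
  also have "\<dots> = rcomb I0 \<alpha> (\<lambda>i. - d i)" by (rule rcomb_uminus)
  finally have cd: "rcomb I0 \<alpha> c = rcomb I0 \<alpha> (\<lambda>i. - d i)" .
  then have "\<forall>i\<in>I0. c i = 0"
  proof (intro ballI)
    fix i assume i: "i\<in>I0"
    have "c i = - d i" using rcomb_unique[OF cd i] .
    then show "c i = 0" using c(1) d(1) i by force
  qed
  then have "a = rcomb I0 \<alpha> (\<lambda>i. 0)" using c(2) by (auto intro: rcomb_cong)
  then show ?thesis by (simp add: rcomb_def)
qed

lemma root_cases: "b\<in>R \<Longrightarrow> ge0 b \<or> ge0 (-b)"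
proof -
  assume "b\<in>R"
  then obtain c where c: "(\<forall>i\<in>I0. 0 \<le> c i) \<or> (\<forall>i\<in>I0. c i \<le> 0)" "b = rcomb I0 \<alpha> c" using expand by blast
  show ?thesis
  proof (cases "\<forall>i\<in>I0. 0 \<le> c i")
    case True
    then have "ge0 b" unfolding ge0_def using c(2) by (intro exI[of _ c]) simp
    then show ?thesis ..
  next
    case False
    then have nn: "\<forall>i\<in>I0. 0 \<le> - c i" using c(1) by auto
    have "-b = - rcomb I0 \<alpha> c" using c(2) by simp
    also have "\<dots> = rcomb I0 \<alpha> (\<lambda>i. - c i)" by (rule rcomb_uminus)
    finally have "ge0 (-b)" unfolding ge0_def using nn by (intro exI[of _ "\<lambda>i. - c i"]) simp
    then show ?thesis ..
  qed
qed

lemma pos_or_neg: "b\<in>R \<Longrightarrow> b \<in> pos \<or> -b \<in> pos"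
  by (auto simp: pos_iff dest: root_cases negR)
lemma not_both: "b \<in> pos \<Longrightarrow> -b \<notin> pos"
  using ge0_antisym[of b] nz[of b] unfolding pos_iff by auto
lemma neg_iff: "b\<in>R \<Longrightarrow> b \<notin> pos \<longleftrightarrow> -b \<in> pos"
  using pos_or_neg[of b] not_both[of b] not_both[of "-b"] by auto
lemma neg_iff2: "b\<in>R \<Longrightarrow> b \<notin> pos \<longleftrightarrow> ge0 (-b)"
  using neg_iff[of b] pos_iff[of "-b"] negR[of b] by auto
lemma posR: "b \<in> pos \<Longrightarrow> b \<in> R" using pos_iff by simp
lemma finpos: "finite pos" by (rule finite_subset[OF _ finR]) (auto simp: pos_iff)

lemma a_pos: "i\<in>I0 \<Longrightarrow> \<alpha> i \<in> pos"
proof -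
  assume i: "i\<in>I0"
  have "ge0 (\<alpha> i)" unfolding ge0_def
    by (rule exI[of _ "\<lambda>j. if j = i then 1 else 0"]) (simp add: rcomb_single[OF i])
  then show ?thesis using aR i pos_iff by blast
qed

lemma cpZ': "a\<in>R \<Longrightarrow> b\<in>R \<Longrightarrow> \<exists>t::int. coroot_pair b a = of_int t"
  using cpZ by (meson Ints_cases)

lemma simple_refl_pos: assumes i: "i\<in>I0" and d: "\<delta> \<in> pos" "\<delta> \<noteq> \<alpha> i"
  shows "refl (\<alpha> i) \<delta> \<in> pos"
proof (rule ccontr)
  assume nn: "refl (\<alpha> i) \<delta> \<notin> pos"
  obtain c where c: "\<forall>i\<in>I0. 0 \<le> c i" "\<delta> = rcomb I0 \<alpha> c" using d pos_iff ge0_def by blast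
  obtain t where t: "coroot_pair \<delta> (\<alpha> i) = of_int t" using cpZ' aR i posR d by blast
  have "refl (\<alpha> i) \<delta> = rcomb I0 \<alpha> c - of_int t *\<^sub>R \<alpha> i" unfolding refl_def t using c(2) by simp
  also have "of_int t *\<^sub>R \<alpha> i = rcomb I0 \<alpha> (\<lambda>j. if j = i then t else 0)" using rcomb_single[OF i] by simp
  also have "rcomb I0 \<alpha> c - \<dots> = rcomb I0 \<alpha> (\<lambda>j. c j - (if j = i then t else 0))" by (rule rcomb_diff)
  finally have eq: "refl (\<alpha> i) \<delta> = rcomb I0 \<alpha> (\<lambda>j. c j - (if j = i then t else 0))" .
  have rR: "refl (\<alpha> i) \<delta> \<in> R" using reflR aR i posR d by blast
  then obtain e where e: "\<forall>i\<in>I0. 0 \<le> e i" "- refl (\<alpha> i) \<delta> = rcomb I0 \<alpha> e"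
    using nn neg_iff2 ge0_def by blast
  have "refl (\<alpha> i) \<delta> = - (- refl (\<alpha> i) \<delta>)" by simp
  also have "\<dots> = - rcomb I0 \<alpha> e" using e(2) by simp
  also have "\<dots> = rcomb I0 \<alpha> (\<lambda>j. - e j)" by (rule rcomb_uminus)
  finally have "rcomb I0 \<alpha> (\<lambda>j. c j - (if j = i then t else 0)) = rcomb I0 \<alpha> (\<lambda>j. - e j)"
    using eq by simp
  then have "\<forall>j\<in>I0. j \<noteq> i \<longrightarrow> c j = - e j" using rcomb_unique by fastforce
  then have z: "\<forall>j\<in>I0. j \<noteq> i \<longrightarrow> c j = 0" using c e by force
  have "\<delta> = rcomb I0 \<alpha> (\<lambda>j. if j = i then c i else 0)"
    using c(2) z by (auto intro: rcomb_cong)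
  then have dd: "\<delta> = of_int (c i) *\<^sub>R \<alpha> i" using rcomb_single i by simp
  have "of_int (c i) *\<^sub>R \<alpha> i \<in> R" using dd posR d(1) by simp
  from reduced[OF aR[OF i] this] have "real_of_int (c i) = 1 \<or> real_of_int (c i) = -1" .
  then have "c i = 1" using c i by auto
  then show False using d dd by simp
qed

end

context rsys begin

abbreviation W where "W \<equiv> weyl_sub \<alpha> I0"

lemma weyl_sub_iff: "x \<in> weyl_sub \<alpha> K \<longleftrightarrow> (\<exists>xs. set xs \<subseteq> K \<and> x = wprod \<alpha> xs)"
  by (auto simp: weyl_sub_def)

lemma orth_wprod: "set xs \<subseteq> I0 \<Longrightarrow> orth (wprod \<alpha> xs)"
proof (induct "xs")
  case Nil show ?case unfolding wprod_Nil by (rule orth_id)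
next
  case (Cons i xs)
  then have "orth (wprod \<alpha> xs)" "i \<in> I0" by auto
  then show ?case unfolding wprod_Cons by (intro orth_comp orth_refl anz)
qed

lemma wprod_R: "set xs \<subseteq> I0 \<Longrightarrow> x \<in> R \<Longrightarrow> wprod \<alpha> xs x \<in> R"
proof (induct "xs")
  case Nil then show ?case by (simp add: wprod_Nil)
next
  case (Cons i xs)
  then show ?case by (simp add: wprod_Cons reflR aR)
qed

lemma wprod_rev: "set xs \<subseteq> I0 \<Longrightarrow> wprod \<alpha> (rev xs) \<circ> wprod \<alpha> xs = id"
proof (induct "xs")
  case Nil then show ?case by (simp add: wprod_Nil)
next
  case (Cons i xs)
  have "wprod \<alpha> (rev (i#xs)) \<circ> wprod \<alpha> (i#xs) = wprod \<alpha> (rev xs) \<circ> (refl (\<alpha> i) \<circ> refl (\<alpha> i)) \<circ> wprod \<alpha> xs"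
    by (simp add: wprod_append wprod_Cons wprod_Nil comp_assoc)
  also have "refl (\<alpha> i) \<circ> refl (\<alpha> i) = id" using Cons.prems by (auto simp: refl_refl anz)
  finally show ?case using Cons by simp
qed

lemma wprod_rev2: "set xs \<subseteq> I0 \<Longrightarrow> wprod \<alpha> xs \<circ> wprod \<alpha> (rev xs) = id"
  using wprod_rev[of "rev xs"] by simp

lemma W_comp: "x \<in> weyl_sub \<alpha> K \<Longrightarrow> y \<in> weyl_sub \<alpha> K \<Longrightarrow> x \<circ> y \<in> weyl_sub \<alpha> K"
proof -
  assume "x \<in> weyl_sub \<alpha> K" "y \<in> weyl_sub \<alpha> K"
  then obtain xs ys where "set xs \<subseteq> K" "x = wprod \<alpha> xs" "set ys \<subseteq> K" "y = wprod \<alpha> ys"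
    unfolding weyl_sub_iff by blast
  then show ?thesis unfolding weyl_sub_iff by (intro exI[of _ "xs @ ys"]) (simp add: wprod_append)
qed

lemma W_id: "id \<in> weyl_sub \<alpha> K"
  unfolding weyl_sub_iff by (intro exI[of _ "[]"]) (simp add: wprod_Nil)

lemma W_refl: "i \<in> K \<Longrightarrow> refl (\<alpha> i) \<in> weyl_sub \<alpha> K"
  unfolding weyl_sub_iff by (intro exI[of _ "[i]"]) (simp add: wprod_Cons wprod_Nil)

lemma W_mono: "K \<subseteq> I0 \<Longrightarrow> weyl_sub \<alpha> K \<subseteq> W"
  unfolding weyl_sub_def by blast

lemma W_inv: "K \<subseteq> I0 \<Longrightarrow> x \<in> weyl_sub \<alpha> K \<Longrightarrow> \<exists>y\<in>weyl_sub \<alpha> K. y \<circ> x = id \<and> x \<circ> y = id"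
proof -
  assume K: "K \<subseteq> I0" and "x \<in> weyl_sub \<alpha> K"
  then obtain xs where xs: "set xs \<subseteq> K" "x = wprod \<alpha> xs" unfolding weyl_sub_iff by blast
  have "set xs \<subseteq> I0" using xs K by blast
  then have "wprod \<alpha> (rev xs) \<circ> x = id \<and> x \<circ> wprod \<alpha> (rev xs) = id"
    using xs wprod_rev wprod_rev2 by simp
  moreover have "wprod \<alpha> (rev xs) \<in> weyl_sub \<alpha> K" unfolding weyl_sub_iff using xs by (intro exI[of _ "rev xs"]) auto
  ultimately show ?thesis by blast
qed

lemma W_orth: "x \<in> W \<Longrightarrow> orth x"
  unfolding weyl_sub_iff using orth_wprod by blast

lemma W_R: "x \<in> W \<Longrightarrow> b \<in> R \<Longrightarrow> x b \<in> R"
  unfolding weyl_sub_iff using wprod_R by blast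

lemma W_surj: "x \<in> W \<Longrightarrow> b \<in> R \<Longrightarrow> \<exists>a\<in>R. x a = b"
proof -
  assume x: "x \<in> W" and b: "b \<in> R"
  obtain y where y: "y \<in> W" "y \<circ> x = id" "x \<circ> y = id" using W_inv[OF order_refl x] by blast
  have "x (y b) = b" using y(3) by (metis comp_apply id_apply)
  then show ?thesis using W_R[OF y(1) b] by blast
qed

definition co :: "'a \<Rightarrow> 'i \<Rightarrow> int" where "co b = (SOME c. b = rcomb I0 \<alpha> c)"

lemma co_eq: "b = rcomb I0 \<alpha> c \<Longrightarrow> b = rcomb I0 \<alpha> (co b)"
  unfolding co_def by (rule someI[of "\<lambda>c. b = rcomb I0 \<alpha> c"])

lemma co_unique: "b = rcomb I0 \<alpha> c \<Longrightarrow> i\<in>I0 \<Longrightarrow> co b i = c i"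
  using co_eq rcomb_unique by metis

lemma co_R: "b \<in> R \<Longrightarrow> b = rcomb I0 \<alpha> (co b)"
  using expand co_eq by blast

definition ht :: "'a \<Rightarrow> int" where "ht b = (\<Sum>i\<in>I0. co b i)"

lemma pos_co: "b \<in> pos \<Longrightarrow> i\<in>I0 \<Longrightarrow> 0 \<le> co b i"
proof -
  assume "b \<in> pos" "i\<in>I0"
  then obtain c where "\<forall>i\<in>I0. 0 \<le> c i" "b = rcomb I0 \<alpha> c" unfolding pos_iff ge0_def by blast
  then show ?thesis using co_unique \<open>i\<in>I0\<close> by simp
qed

lemma ht_pos: "b \<in> pos \<Longrightarrow> 1 \<le> ht b"
proof (rule ccontr)
  assume b: "b \<in> pos" and "\<not> 1 \<le> ht b"
  moreover have "0 \<le> ht b" unfolding ht_def using pos_co[OF b] by (simp add: sum_nonneg)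
  ultimately have "ht b = 0" by simp
  then have "\<forall>i\<in>I0. co b i = 0" unfolding ht_def using sum_nonneg_eq_0_iff[OF finI] pos_co[OF b] by blast
  then have "rcomb I0 \<alpha> (co b) = rcomb I0 \<alpha> (\<lambda>i. 0)" by (intro rcomb_cong) auto
  then have "b = rcomb I0 \<alpha> (\<lambda>i. 0)" using co_R[OF posR[OF b]] by simp
  then have "b = 0" by (simp add: rcomb_def)
  then show False using b posR nz by blast
qed

lemma refl_rcomb: assumes i: "i\<in>I0" and t: "coroot_pair (rcomb I0 \<alpha> c) (\<alpha> i) = of_int t"
  shows "refl (\<alpha> i) (rcomb I0 \<alpha> c) = rcomb I0 \<alpha> (\<lambda>j. c j - (if j = i then t else 0))"
proof -
  have "refl (\<alpha> i) (rcomb I0 \<alpha> c) = rcomb I0 \<alpha> c - of_int t *\<^sub>R \<alpha> i" unfolding refl_def t by simp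
  also have "of_int t *\<^sub>R \<alpha> i = rcomb I0 \<alpha> (\<lambda>j. if j = i then t else 0)" using rcomb_single[OF i] by simp
  also have "rcomb I0 \<alpha> c - \<dots> = rcomb I0 \<alpha> (\<lambda>j. c j - (if j = i then t else 0))" by (rule rcomb_diff)
  finally show ?thesis .
qed

lemma ht_refl: assumes b: "b\<in>R" and i: "i\<in>I0" and t: "coroot_pair b (\<alpha> i) = of_int t"
  shows "ht (refl (\<alpha> i) b) = ht b - t"
proof -
  have bb: "b = rcomb I0 \<alpha> (co b)" using co_R[OF b] .
  have "refl (\<alpha> i) b = rcomb I0 \<alpha> (\<lambda>j. co b j - (if j = i then t else 0))"
    using refl_rcomb[OF i, of "co b" t] t bb by simp
  then have "\<forall>j\<in>I0. co (refl (\<alpha> i) b) j = co b j - (if j = i then t else 0)"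
    using co_unique by blast
  then have "ht (refl (\<alpha> i) b) = (\<Sum>j\<in>I0. co b j - (if j = i then t else 0))" unfolding ht_def
    by (intro sum.cong) auto
  also have "\<dots> = ht b - t" unfolding ht_def using finI i by (simp add: sum_subtractf)
  finally show ?thesis .
qed

lemma exists_pos_inner: assumes b: "b \<in> pos" shows "\<exists>i\<in>I0. b \<bullet> \<alpha> i > 0"
proof (rule ccontr)
  assume "\<not> ?thesis"
  then have le: "\<forall>i\<in>I0. b \<bullet> \<alpha> i \<le> 0" by auto
  have "b \<bullet> b = b \<bullet> rcomb I0 \<alpha> (co b)" using co_R[OF posR[OF b]] by simp
  also have "\<dots> = (\<Sum>i\<in>I0. of_int (co b i) * (b \<bullet> \<alpha> i))"
    by (simp add: rcomb_def inner_sum_right)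
  also have "\<dots> \<le> 0" using le pos_co[OF b] by (intro sum_nonpos) (simp add: mult_nonneg_nonpos)
  finally have "b \<bullet> b \<le> 0" .
  moreover have "b \<bullet> b > 0" using nz[OF posR[OF b]] by simp
  ultimately show False by simp
qed

lemma conj_simple: "b \<in> pos \<Longrightarrow> \<exists>y\<in>W. \<exists>j\<in>I0. b = y (\<alpha> j)"
proof (induct "nat (ht b)" arbitrary: b rule: less_induct)
  case less
  obtain i where i: "i\<in>I0" "b \<bullet> \<alpha> i > 0" using exists_pos_inner[OF less.prems] by blast
  show ?case
  proof (cases "b = \<alpha> i")
    case True
    show ?thesis by (rule bexI[of _ id], rule bexI[of _ i]) (use True i W_id in auto)
  next
    case False
    let ?b' = "refl (\<alpha> i) b"
    have b'pos: "?b' \<in> pos" using simple_refl_pos[OF i(1) less.prems False] .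
    obtain t where t: "coroot_pair b (\<alpha> i) = of_int t" using cpZ'[OF aR[OF i(1)] posR[OF less.prems]] by blast
    have "coroot_pair b (\<alpha> i) > 0" using cp_sign[OF anz[OF i(1)]] i(2) by blast
    then have t1: "t \<ge> 1" using t by simp
    have "ht ?b' = ht b - t" using ht_refl[OF posR[OF less.prems] i(1) t] .
    moreover have "ht ?b' \<ge> 1" using ht_pos[OF b'pos] .
    ultimately have "nat (ht ?b') < nat (ht b)" using t1 by simp
    then obtain y j where y: "y\<in>W" "j\<in>I0" "?b' = y (\<alpha> j)" using less.hyps b'pos by blast
    have "b = refl (\<alpha> i) ?b'" using refl_refl[OF anz[OF i(1)]] by simp
    also have "\<dots> = (refl (\<alpha> i) \<circ> y) (\<alpha> j)" using y(3) by simp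
    finally show ?thesis using W_comp[OF W_refl[OF i(1)] y(1)] y(2) by blast
  qed
qed

lemma refl_W: assumes b: "b \<in> R" shows "refl b \<in> W"
proof -
  obtain b0 where b0: "b0 \<in> pos" "refl b0 = refl b"
    using pos_or_neg[OF b] refl_uminus[of b] by metis
  obtain y j where y: "y\<in>W" "j\<in>I0" "b0 = y (\<alpha> j)" using conj_simple[OF b0(1)] by blast
  obtain y' where y': "y' \<in> W" "y' \<circ> y = id" "y \<circ> y' = id" using W_inv[OF order_refl y(1)] by blast
  have "refl b0 = y \<circ> refl (\<alpha> j) \<circ> y'"
  proof
    fix x
    have "(y \<circ> refl (\<alpha> j) \<circ> y') x = refl (y (\<alpha> j)) (y (y' x))"
      using orth_conj[OF W_orth[OF y(1)]] by simp
    also have "y (y' x) = x" using y'(3) by (metis comp_apply id_apply)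
    finally show "refl b0 x = (y \<circ> refl (\<alpha> j) \<circ> y') x" using y(3) by simp
  qed
  then show ?thesis using b0(2) W_comp[OF W_comp[OF y(1) W_refl[OF y(2)]] y'(1)] by simp
qed

end

context rsys begin

definition Inv :: "('a \<Rightarrow> 'a) \<Rightarrow> 'a set" where "Inv x = {\<delta>\<in>pos. x \<delta> \<notin> pos}"
lemma finInv: "finite (Inv x)" unfolding Inv_def using finpos by simp

lemma Inv_id: "Inv id = {}" by (auto simp: Inv_def)
lemma Inv_id': "Inv (\<lambda>a. a) = {}" by (auto simp: Inv_def)

lemma Inv_left: assumes y: "orth y" and k: "k\<in>I0"
  shows "card (Inv (refl (\<alpha> k) \<circ> y)) \<le> card (Inv y) + 1"
proof -
  have sub: "Inv (refl (\<alpha> k) \<circ> y) \<subseteq> Inv y \<union> {\<delta>\<in>pos. y \<delta> = \<alpha> k}"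
  proof
    fix \<delta> assume d: "\<delta> \<in> Inv (refl (\<alpha> k) \<circ> y)"
    then have dp: "\<delta>\<in>pos" "refl (\<alpha> k) (y \<delta>) \<notin> pos" by (auto simp: Inv_def)
    show "\<delta> \<in> Inv y \<union> {\<delta>\<in>pos. y \<delta> = \<alpha> k}"
    proof (cases "y \<delta> \<in> pos")
      case True
      then have "y \<delta> = \<alpha> k" using simple_refl_pos[OF k True] dp(2) by blast
      then show ?thesis using dp by simp
    next
      case False then show ?thesis using dp by (simp add: Inv_def)
    qed
  qed
  have c1: "card {\<delta>\<in>pos. y \<delta> = \<alpha> k} \<le> 1"
  proof -
    have "finite {\<delta>\<in>pos. y \<delta> = \<alpha> k}" using finpos by simp
    moreover have "\<forall>a\<in>{\<delta>\<in>pos. y \<delta> = \<alpha> k}. \<forall>b\<in>{\<delta>\<in>pos. y \<delta> = \<alpha> k}. a = b"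
      using orth_inj[OF y] by (auto simp: inj_def)
    ultimately have "card {\<delta>\<in>pos. y \<delta> = \<alpha> k} \<le> Suc 0" using card_le_Suc0_iff_eq by blast
    then show ?thesis by simp
  qed
  have "card (Inv (refl (\<alpha> k) \<circ> y)) \<le> card (Inv y \<union> {\<delta>\<in>pos. y \<delta> = \<alpha> k})"
    by (rule card_mono[OF _ sub]) (simp add: finInv finpos)
  also have "\<dots> \<le> card (Inv y) + card {\<delta>\<in>pos. y \<delta> = \<alpha> k}" by (rule card_Un_le)
  finally show ?thesis using c1 by simp
qed

lemma card_bound: "set xs \<subseteq> I0 \<Longrightarrow> card (Inv (wprod \<alpha> xs)) \<le> length xs"
proof (induct xs)
  case Nil show ?case by (simp add: wprod_Nil Inv_id')
next
  case (Cons i xs)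
  then have xs: "set xs \<subseteq> I0" and i: "i\<in>I0" by auto
  have "card (Inv (wprod \<alpha> (i#xs))) \<le> card (Inv (wprod \<alpha> xs)) + 1"
    unfolding wprod_Cons by (rule Inv_left[OF orth_wprod[OF xs] i])
  then show ?case using Cons.hyps[OF xs] by simp
qed

lemma deletion: "set xs \<subseteq> I0 \<Longrightarrow> j \<in> I0 \<Longrightarrow> wprod \<alpha> xs (\<alpha> j) \<notin> pos \<Longrightarrow>
   \<exists>ys. set ys \<subseteq> I0 \<and> length ys + 1 = length xs \<and> wprod \<alpha> xs \<circ> refl (\<alpha> j) = wprod \<alpha> ys"
proof (induct xs)
  case Nil then show ?case using a_pos by (simp add: wprod_Nil)
next
  case (Cons k xs)
  let ?y = "wprod \<alpha> xs"
  have k: "k\<in>I0" and xs: "set xs \<subseteq> I0" using Cons.prems by auto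
  show ?case
  proof (cases "?y (\<alpha> j) \<in> pos")
    case False
    then obtain ys where ys: "set ys \<subseteq> I0" "length ys + 1 = length xs" "?y \<circ> refl (\<alpha> j) = wprod \<alpha> ys"
      using Cons.hyps xs Cons.prems(2) by blast
    have "wprod \<alpha> (k#xs) \<circ> refl (\<alpha> j) = refl (\<alpha> k) \<circ> (?y \<circ> refl (\<alpha> j))"
      by (simp add: wprod_Cons comp_assoc)
    also have "\<dots> = wprod \<alpha> (k#ys)" using ys(3) by (simp add: wprod_Cons)
    finally show ?thesis using ys k by (intro exI[of _ "k#ys"]) simp
  next
    case True
    have "refl (\<alpha> k) (?y (\<alpha> j)) \<notin> pos" using Cons.prems(3) by (simp add: wprod_Cons)
    then have eq: "?y (\<alpha> j) = \<alpha> k" using simple_refl_pos[OF k True] by blast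
    have c: "?y \<circ> refl (\<alpha> j) = refl (\<alpha> k) \<circ> ?y"
    proof
      fix x show "(?y \<circ> refl (\<alpha> j)) x = (refl (\<alpha> k) \<circ> ?y) x"
        using orth_conj[OF orth_wprod[OF xs]] eq by simp
    qed
    have rr: "refl (\<alpha> k) \<circ> refl (\<alpha> k) = id" using refl_refl[OF anz[OF k]] by (auto simp: fun_eq_iff)
    have "wprod \<alpha> (k#xs) \<circ> refl (\<alpha> j) = refl (\<alpha> k) \<circ> (?y \<circ> refl (\<alpha> j))"
      by (simp add: wprod_Cons comp_assoc)
    also have "\<dots> = (refl (\<alpha> k) \<circ> refl (\<alpha> k)) \<circ> ?y" using c by (simp add: comp_assoc)
    also have "\<dots> = ?y" using rr by simp
    finally show ?thesis using xs by (intro exI[of _ xs]) simp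
  qed
qed

lemma Inv_right: assumes x: "orth x" and j: "j\<in>I0" and xa: "x (\<alpha> j) \<in> pos"
  shows "card (Inv (x \<circ> refl (\<alpha> j))) = card (Inv x) + 1"
proof -
  have aj: "\<alpha> j \<noteq> 0" using anz[OF j] .
  have eq: "Inv (x \<circ> refl (\<alpha> j)) = insert (\<alpha> j) (refl (\<alpha> j) ` Inv x)"
  proof (intro equalityI subsetI)
    fix \<delta> assume "\<delta> \<in> Inv (x \<circ> refl (\<alpha> j))"
    then have d: "\<delta>\<in>pos" "x (refl (\<alpha> j) \<delta>) \<notin> pos" by (auto simp: Inv_def)
    show "\<delta> \<in> insert (\<alpha> j) (refl (\<alpha> j) ` Inv x)"
    proof (cases "\<delta> = \<alpha> j")
      case True then show ?thesis by simp
    next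
      case False
      then have "refl (\<alpha> j) \<delta> \<in> pos" using simple_refl_pos[OF j d(1)] by blast
      then have "refl (\<alpha> j) \<delta> \<in> Inv x" using d(2) by (simp add: Inv_def)
      moreover have "\<delta> = refl (\<alpha> j) (refl (\<alpha> j) \<delta>)" using refl_refl[OF aj] by simp
      ultimately show ?thesis by blast
    qed
  next
    fix \<delta> assume "\<delta> \<in> insert (\<alpha> j) (refl (\<alpha> j) ` Inv x)"
    then show "\<delta> \<in> Inv (x \<circ> refl (\<alpha> j))"
    proof
      assume da: "\<delta> = \<alpha> j"
      have "x (refl (\<alpha> j) (\<alpha> j)) = - x (\<alpha> j)" using refl_self[OF aj] orth_uminus[OF x] by simp
      then show ?thesis using da a_pos[OF j] not_both[OF xa] by (simp add: Inv_def)
    next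
      assume "\<delta> \<in> refl (\<alpha> j) ` Inv x"
      then obtain \<gamma> where g: "\<gamma> \<in> Inv x" "\<delta> = refl (\<alpha> j) \<gamma>" by blast
      have gp: "\<gamma>\<in>pos" "x \<gamma> \<notin> pos" using g(1) by (auto simp: Inv_def)
      have "\<gamma> \<noteq> \<alpha> j" using gp xa by blast
      then have "\<delta> \<in> pos" using simple_refl_pos[OF j gp(1)] g(2) by simp
      moreover have "x (refl (\<alpha> j) \<delta>) = x \<gamma>" using g(2) refl_refl[OF aj] by simp
      ultimately show ?thesis using gp(2) by (simp add: Inv_def)
    qed
  qed
  have nin: "\<alpha> j \<notin> refl (\<alpha> j) ` Inv x"
  proof
    assume "\<alpha> j \<in> refl (\<alpha> j) ` Inv x"
    then obtain \<gamma> where g: "\<gamma> \<in> Inv x" "\<alpha> j = refl (\<alpha> j) \<gamma>" by blast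
    have "refl (\<alpha> j) (\<alpha> j) = refl (\<alpha> j) (refl (\<alpha> j) \<gamma>)" using g(2) by simp
    also have "\<dots> = \<gamma>" using refl_refl[OF aj] by simp
    finally have "\<gamma> = - \<alpha> j" using refl_self[OF aj] by simp
    then show False using g(1) not_both[OF a_pos[OF j]] by (simp add: Inv_def)
  qed
  have "inj_on (refl (\<alpha> j)) (Inv x)"
    using orth_inj[OF orth_refl[OF aj]] by (simp add: inj_on_def inj_def)
  then have "card (refl (\<alpha> j) ` Inv x) = card (Inv x)" by (rule card_image)
  then show ?thesis using eq nin finInv by (simp add: card_insert_disjoint)
qed

lemma wlen_le: "set xs \<subseteq> I0 \<Longrightarrow> wlen \<alpha> I0 (wprod \<alpha> xs) \<le> length xs"
  unfolding wlen_def by (rule Least_le) blast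

lemma wlen_ex: assumes "x \<in> W" shows "\<exists>xs. set xs \<subseteq> I0 \<and> length xs = wlen \<alpha> I0 x \<and> wprod \<alpha> xs = x"
proof -
  obtain xs where xs: "set xs \<subseteq> I0" "x = wprod \<alpha> xs" using assms unfolding weyl_sub_iff by blast
  have "\<exists>n. \<exists>xs. set xs \<subseteq> I0 \<and> length xs = n \<and> wprod \<alpha> xs = x" using xs by blast
  then show ?thesis unfolding wlen_def by (rule LeastI_ex)
qed

lemma reduced_card: "set xs \<subseteq> I0 \<Longrightarrow> wlen \<alpha> I0 (wprod \<alpha> xs) = length xs \<Longrightarrow> card (Inv (wprod \<alpha> xs)) = length xs"
proof (induct xs rule: rev_induct)
  case Nil show ?case by (simp add: wprod_Nil Inv_id')
next
  case (snoc j xs)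
  let ?y = "wprod \<alpha> xs"
  have xs: "set xs \<subseteq> I0" and j: "j\<in>I0" using snoc.prems by auto
  have yW: "?y \<in> W" unfolding weyl_sub_iff using xs by blast
  have min: "wlen \<alpha> I0 ?y = length xs"
  proof (rule ccontr)
    assume "wlen \<alpha> I0 ?y \<noteq> length xs"
    then have lt: "wlen \<alpha> I0 ?y < length xs" using wlen_le[OF xs] by simp
    obtain zs where zs: "set zs \<subseteq> I0" "length zs = wlen \<alpha> I0 ?y" "wprod \<alpha> zs = ?y" using wlen_ex[OF yW] by blast
    have "wprod \<alpha> (zs @ [j]) = wprod \<alpha> (xs @ [j])" using zs(3) by (simp add: wprod_append)
    moreover have "set (zs @ [j]) \<subseteq> I0" using zs j by simp
    ultimately have "wlen \<alpha> I0 (wprod \<alpha> (xs @ [j])) \<le> length (zs @ [j])" using wlen_le by metis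
    then show False using snoc.prems(2) lt zs(2) by simp
  qed
  have cy: "card (Inv ?y) = length xs" using snoc.hyps[OF xs min] .
  have ya: "?y (\<alpha> j) \<in> pos"
  proof (rule ccontr)
    assume "?y (\<alpha> j) \<notin> pos"
    then obtain ys where ys: "set ys \<subseteq> I0" "length ys + 1 = length xs" "?y \<circ> refl (\<alpha> j) = wprod \<alpha> ys"
      using deletion[OF xs j] by blast
    have "wprod \<alpha> (xs @ [j]) = wprod \<alpha> ys" using ys(3) by (simp add: wprod_snoc)
    then have "wlen \<alpha> I0 (wprod \<alpha> (xs @ [j])) \<le> length ys" using wlen_le[OF ys(1)] by simp
    then show False using snoc.prems(2) ys(2) by simp
  qed
  have "card (Inv (wprod \<alpha> (xs @ [j]))) = card (Inv ?y) + 1"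
    unfolding wprod_snoc by (rule Inv_right[OF orth_wprod[OF xs] j ya])
  then show ?case using cy by simp
qed

lemma wlen_Inv: "x \<in> W \<Longrightarrow> wlen \<alpha> I0 x = card (Inv x)"
  using wlen_ex reduced_card by metis

lemma Inv_empty_id: "x \<in> W \<Longrightarrow> Inv x = {} \<Longrightarrow> x = id"
proof -
  assume x: "x \<in> W" "Inv x = {}"
  then have "wlen \<alpha> I0 x = 0" using wlen_Inv by simp
  then obtain xs where "length xs = 0" "wprod \<alpha> xs = x" using wlen_ex[OF x(1)] by metis
  then show ?thesis by (simp add: wprod_Nil)
qed

end

lemma wprod_fix: "(\<forall>j\<in>set xs. refl (\<alpha> j) L = L) \<Longrightarrow> wprod \<alpha> xs L = L"
  by (induct xs) (simp_all add: wprod_Nil wprod_Cons)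

locale prs = rsys R I0 \<alpha> for R :: "'a::euclidean_space set" and I0 :: "'i set" and \<alpha> +
  fixes \<Lambda> :: 'a and m :: "'i \<Rightarrow> nat" and J :: "'i set"
  assumes lam: "\<forall>i\<in>I0. coroot_pair \<Lambda> (\<alpha> i) = real (m i)"
    and J_def: "J = {j\<in>I0. coroot_pair \<Lambda> (\<alpha> j) = 0}"
begin

definition P :: "'a set" where "P = {\<eta>\<in>R. 0 < \<Lambda> \<bullet> \<eta>}"
definition N :: "('a \<Rightarrow> 'a) \<Rightarrow> nat" where "N x = card {\<delta>\<in>P. x \<delta> \<notin> pos}"
abbreviation WJ where "WJ \<equiv> weyl_sub \<alpha> J"

lemma JI: "J \<subseteq> I0" using J_def by auto
lemma WJW: "x \<in> WJ \<Longrightarrow> x \<in> W" using W_mono[OF JI] by blast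

lemma lam_nonneg: "i\<in>I0 \<Longrightarrow> 0 \<le> \<Lambda> \<bullet> \<alpha> i"
  using lam cp_sign[OF anz] by (metis not_le of_nat_less_0_iff)
lemma lam_zero_iff: "i\<in>I0 \<Longrightarrow> \<Lambda> \<bullet> \<alpha> i = 0 \<longleftrightarrow> i \<in> J"
  using J_def cp_sign[OF anz] by auto

lemma lam_rcomb: "\<Lambda> \<bullet> rcomb I0 \<alpha> c = (\<Sum>i\<in>I0. of_int (c i) * (\<Lambda> \<bullet> \<alpha> i))"
  by (simp add: rcomb_def inner_sum_right)

lemma lam_ge0: assumes "ge0 v" shows "0 \<le> \<Lambda> \<bullet> v"
proof -
  obtain c where c: "\<forall>i\<in>I0. 0 \<le> c i" "v = rcomb I0 \<alpha> c" using assms ge0_def by blast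
  show ?thesis unfolding c(2) lam_rcomb using c(1) lam_nonneg by (intro sum_nonneg) simp
qed

lemma P_R: "\<eta> \<in> P \<Longrightarrow> \<eta> \<in> R" by (simp add: P_def)
lemma finP: "finite P" by (rule finite_subset[OF _ finR]) (auto simp: P_def)

lemma P_pos: assumes "\<eta> \<in> P" shows "\<eta> \<in> pos"
proof (rule ccontr)
  assume "\<eta> \<notin> pos"
  then have "ge0 (-\<eta>)" using neg_iff2 P_R[OF assms] by blast
  then have "0 \<le> \<Lambda> \<bullet> (-\<eta>)" by (rule lam_ge0)
  then show False using assms by (simp add: P_def)
qed

lemma pos_lam: "\<eta> \<in> pos \<Longrightarrow> 0 \<le> \<Lambda> \<bullet> \<eta>" using lam_ge0 pos_iff by blast

lemma lam_zero_co: assumes e: "\<eta> \<in> pos" "\<Lambda> \<bullet> \<eta> = 0" "i \<in> I0" "i \<notin> J" shows "co \<eta> i = 0"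
proof -
  have "\<Lambda> \<bullet> \<eta> = \<Lambda> \<bullet> rcomb I0 \<alpha> (co \<eta>)" by (rule arg_cong[OF co_R[OF posR[OF e(1)]]])
  also have "\<dots> = (\<Sum>i\<in>I0. of_int (co \<eta> i) * (\<Lambda> \<bullet> \<alpha> i))" by (rule lam_rcomb)
  finally have S: "(\<Sum>i\<in>I0. of_int (co \<eta> i) * (\<Lambda> \<bullet> \<alpha> i)) = 0" using e(2) by simp
  have nn: "\<And>j. j \<in> I0 \<Longrightarrow> 0 \<le> of_int (co \<eta> j) * (\<Lambda> \<bullet> \<alpha> j)"
    using pos_co[OF e(1)] lam_nonneg by (intro mult_nonneg_nonneg) simp_all
  have "of_int (co \<eta> i) * (\<Lambda> \<bullet> \<alpha> i) = 0"
    by (rule sum_nonneg_0[where f="\<lambda>j. of_int (co \<eta> j) * (\<Lambda> \<bullet> \<alpha> j)", OF finI nn S e(3)])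
  moreover have "\<Lambda> \<bullet> \<alpha> i \<noteq> 0" using lam_zero_iff e(3,4) by blast
  ultimately show ?thesis by simp
qed

lemma P_eq: "P = pos_roots R I0 \<alpha> - pos_roots_J R I0 \<alpha> J"
proof (intro equalityI subsetI)
  fix \<eta> assume e: "\<eta> \<in> P"
  have "\<eta> \<notin> pos_roots_J R I0 \<alpha> J"
  proof
    assume "\<eta> \<in> pos_roots_J R I0 \<alpha> J"
    then obtain c where c: "\<forall>i\<in>I0 - J. c i = 0" "\<eta> = rcomb I0 \<alpha> c" unfolding pos_roots_J_def by blast
    have "\<Lambda> \<bullet> \<eta> = (\<Sum>i\<in>I0. of_int (c i) * (\<Lambda> \<bullet> \<alpha> i))" using c(2) lam_rcomb by simp
    also have "\<dots> = 0" using c(1) lam_zero_iff by (intro sum.neutral) auto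
    finally show False using e by (simp add: P_def)
  qed
  then show "\<eta> \<in> pos_roots R I0 \<alpha> - pos_roots_J R I0 \<alpha> J" using P_pos[OF e] by simp
next
  fix \<eta> assume "\<eta> \<in> pos_roots R I0 \<alpha> - pos_roots_J R I0 \<alpha> J"
  then have e: "\<eta> \<in> pos" "\<eta> \<notin> pos_roots_J R I0 \<alpha> J" by auto
  have "\<Lambda> \<bullet> \<eta> \<noteq> 0"
  proof
    assume z: "\<Lambda> \<bullet> \<eta> = 0"
    have "\<forall>i\<in>I0 - J. co \<eta> i = 0" using lam_zero_co[OF e(1) z] by blast
    then have "\<eta> \<in> pos_roots_J R I0 \<alpha> J" unfolding pos_roots_J_def
      using e(1) co_R[OF posR[OF e(1)]] by blast
    then show False using e(2) by blast
  qed
  then show "\<eta> \<in> P" using pos_lam[OF e(1)] posR[OF e(1)] by (simp add: P_def)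
qed

lemma WJ_fix: "v \<in> WJ \<Longrightarrow> v \<Lambda> = \<Lambda>"
proof -
  assume "v \<in> WJ"
  then obtain xs where xs: "set xs \<subseteq> J" "v = wprod \<alpha> xs" unfolding weyl_sub_iff by blast
  have "\<forall>j\<in>set xs. refl (\<alpha> j) \<Lambda> = \<Lambda>"
  proof
    fix j assume "j \<in> set xs"
    then have "j \<in> J" using xs by blast
    then have "coroot_pair \<Lambda> (\<alpha> j) = 0" using J_def by blast
    then show "refl (\<alpha> j) \<Lambda> = \<Lambda>" by (simp add: refl_def)
  qed
  then show ?thesis using xs wprod_fix by metis
qed

lemma WJ_lam: "v \<in> WJ \<Longrightarrow> \<Lambda> \<bullet> v \<eta> = \<Lambda> \<bullet> \<eta>"
  using WJ_fix orth_inner[OF W_orth[OF WJW]] by metis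

lemma WJ_P: "v \<in> WJ \<Longrightarrow> \<delta> \<in> R \<Longrightarrow> v \<delta> \<in> P \<longleftrightarrow> \<delta> \<in> P"
  using WJ_lam W_R[OF WJW] by (auto simp: P_def)

lemma WJ_image: assumes v: "v \<in> WJ" shows "v ` P = P"
proof (intro equalityI subsetI)
  fix x assume "x \<in> v ` P" then show "x \<in> P" using WJ_P[OF v] P_R by blast
next
  fix x assume x: "x \<in> P"
  obtain a where a: "a \<in> R" "v a = x" using W_surj[OF WJW[OF v] P_R[OF x]] by blast
  then have "a \<in> P" using WJ_P[OF v] x by blast
  then show "x \<in> v ` P" using a by blast
qed

lemma N_comp: assumes v: "v \<in> WJ" shows "N (x \<circ> v) = N x"
proof -
  have "v ` {\<delta>\<in>P. x (v \<delta>) \<notin> pos} = {\<delta>\<in>P. x \<delta> \<notin> pos}"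
    using WJ_image[OF v] by auto
  moreover have "inj_on v {\<delta>\<in>P. x (v \<delta>) \<notin> pos}"
    using orth_inj[OF W_orth[OF WJW[OF v]]] by (simp add: inj_on_def inj_def)
  ultimately show ?thesis unfolding N_def using card_image by fastforce
qed

lemma ge0_zero: "ge0 0"
  unfolding ge0_def by (intro exI[of _ "\<lambda>i. 0"]) (simp add: rcomb_def)

lemma ge0_sum: "finite S \<Longrightarrow> (\<And>i. i \<in> S \<Longrightarrow> ge0 (f i)) \<Longrightarrow> ge0 (\<Sum>i\<in>S. f i)"
  by (induct S rule: finite_induct) (auto simp: ge0_zero ge0_add)

lemma min_reps_Inv: assumes u: "u \<in> min_reps \<alpha> I0 J" shows "Inv u \<subseteq> P"
proof
  fix \<delta> assume d: "\<delta> \<in> Inv u"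
  have uW: "u \<in> W" and umin: "\<forall>v\<in>WJ. wlen \<alpha> I0 u \<le> wlen \<alpha> I0 (u \<circ> v)" using u by (auto simp: min_reps_def)
  have dp: "\<delta> \<in> pos" "u \<delta> \<notin> pos" using d by (auto simp: Inv_def)
  show "\<delta> \<in> P"
  proof (rule ccontr)
    assume "\<delta> \<notin> P"
    then have z: "\<Lambda> \<bullet> \<delta> = 0" using pos_lam[OF dp(1)] posR[OF dp(1)] by (auto simp: P_def)
    have "\<exists>j\<in>J. u (\<alpha> j) \<notin> pos"
    proof (rule ccontr)
      assume "\<not> ?thesis"
      then have aj: "\<forall>j\<in>J. u (\<alpha> j) \<in> pos" by blast
      have "u \<delta> = u (rcomb I0 \<alpha> (co \<delta>))" by (rule arg_cong[OF co_R[OF posR[OF dp(1)]]])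
      also have "\<dots> = (\<Sum>i\<in>I0. u (of_int (co \<delta> i) *\<^sub>R \<alpha> i))"
        unfolding rcomb_def by (rule orth_sum[OF W_orth[OF uW]])
      also have "\<dots> = (\<Sum>i\<in>I0. of_int (co \<delta> i) *\<^sub>R u (\<alpha> i))"
        by (rule sum.cong[OF refl]) (rule orth_scale[OF W_orth[OF uW]])
      finally have ud: "u \<delta> = (\<Sum>i\<in>I0. of_int (co \<delta> i) *\<^sub>R u (\<alpha> i))" .
      have "ge0 (\<Sum>i\<in>I0. of_int (co \<delta> i) *\<^sub>R u (\<alpha> i))"
      proof (rule ge0_sum[OF finI])
        fix i assume i: "i \<in> I0"
        show "ge0 (of_int (co \<delta> i) *\<^sub>R u (\<alpha> i))"
        proof (cases "i \<in> J")
          case True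
          then show ?thesis using aj pos_iff ge0_scale pos_co[OF dp(1) i] by blast
        next
          case False
          then have "co \<delta> i = 0" using lam_zero_co[OF dp(1) z i] by blast
          then show ?thesis by (simp add: ge0_zero)
        qed
      qed
      then have "u \<delta> \<in> pos" using ud W_R[OF uW posR[OF dp(1)]] pos_iff by simp
      then show False using dp(2) by blast
    qed
    then obtain j where j: "j \<in> J" "u (\<alpha> j) \<notin> pos" by blast
    have jI: "j \<in> I0" using j JI by blast
    let ?u' = "u \<circ> refl (\<alpha> j)"
    have u'W: "?u' \<in> W" using W_comp[OF uW W_refl[OF jI]] .
    have "?u' (\<alpha> j) = - u (\<alpha> j)" using refl_self[OF anz[OF jI]] orth_uminus[OF W_orth[OF uW]] by simp
    then have u'a: "?u' (\<alpha> j) \<in> pos" using neg_iff[OF W_R[OF uW aR[OF jI]]] j(2) by simp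
    have "card (Inv (?u' \<circ> refl (\<alpha> j))) = card (Inv ?u') + 1"
      by (rule Inv_right[OF W_orth[OF u'W] jI u'a])
    moreover have "?u' \<circ> refl (\<alpha> j) = u" using refl_refl[OF anz[OF jI]] by (simp add: fun_eq_iff)
    ultimately have "wlen \<alpha> I0 ?u' < wlen \<alpha> I0 u" using wlen_Inv[OF uW] wlen_Inv[OF u'W] by simp
    moreover have "wlen \<alpha> I0 u \<le> wlen \<alpha> I0 ?u'" using umin W_refl[OF j(1)] by blast
    ultimately show False by simp
  qed
qed

lemma Inv_P_N: "Inv u \<subseteq> P \<Longrightarrow> card (Inv u) = N u"
proof -
  assume "Inv u \<subseteq> P"
  then have "Inv u = {\<delta>\<in>P. u \<delta> \<notin> pos}" using P_pos by (auto simp: Inv_def)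
  then show ?thesis by (simp add: N_def)
qed

lemma N_le: "N u \<le> card (Inv u)"
  unfolding N_def by (rule card_mono[OF finInv]) (auto simp: Inv_def P_pos)

lemma Inv_P_min: assumes u: "u \<in> W" "Inv u \<subseteq> P" shows "u \<in> min_reps \<alpha> I0 J"
  unfolding min_reps_def
proof (intro CollectI conjI ballI)
  show "u \<in> W" by fact
  fix v assume v: "v \<in> WJ"
  have "wlen \<alpha> I0 u = N u" using wlen_Inv[OF u(1)] Inv_P_N[OF u(2)] by simp
  also have "\<dots> = N (u \<circ> v)" using N_comp[OF v] by simp
  also have "\<dots> \<le> card (Inv (u \<circ> v))" by (rule N_le)
  also have "\<dots> = wlen \<alpha> I0 (u \<circ> v)" using wlen_Inv[OF W_comp[OF u(1) WJW[OF v]]] by simp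
  finally show "wlen \<alpha> I0 u \<le> wlen \<alpha> I0 (u \<circ> v)" .
qed

lemma floor_exists: assumes x: "x \<in> W" shows "\<exists>u. u \<in> min_reps \<alpha> I0 J \<and> (\<exists>v\<in>WJ. u = x \<circ> v)"
proof -
  let ?Q = "\<lambda>n. \<exists>v\<in>WJ. wlen \<alpha> I0 (x \<circ> v) = n"
  have "?Q (wlen \<alpha> I0 (x \<circ> id))" using W_id by blast
  then have "?Q (LEAST n. ?Q n)" by (rule LeastI)
  then obtain v where v: "v \<in> WJ" "wlen \<alpha> I0 (x \<circ> v) = (LEAST n. ?Q n)" by blast
  have "x \<circ> v \<in> min_reps \<alpha> I0 J" unfolding min_reps_def
  proof (intro CollectI conjI ballI)
    show "x \<circ> v \<in> W" using W_comp[OF x WJW[OF v(1)]] .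
    fix v' assume v': "v' \<in> WJ"
    have "?Q (wlen \<alpha> I0 (x \<circ> (v \<circ> v')))" using W_comp[OF v(1) v'] by blast
    then have "(LEAST n. ?Q n) \<le> wlen \<alpha> I0 (x \<circ> (v \<circ> v'))" by (rule Least_le)
    then show "wlen \<alpha> I0 (x \<circ> v) \<le> wlen \<alpha> I0 (x \<circ> v \<circ> v')" using v(2) by (simp add: comp_assoc)
  qed
  then show ?thesis using v(1) by blast
qed

lemma floor_unique: assumes x: "x \<in> W" and u1: "u1 \<in> min_reps \<alpha> I0 J" "v1 \<in> WJ" "u1 = x \<circ> v1"
  and u2: "u2 \<in> min_reps \<alpha> I0 J" "v2 \<in> WJ" "u2 = x \<circ> v2" shows "u1 = u2"
proof -
  obtain v1' where v1': "v1' \<in> WJ" "v1' \<circ> v1 = id" "v1 \<circ> v1' = id" using W_inv[OF JI u1(2)] by blast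
  let ?y = "v1' \<circ> v2"
  have yJ: "?y \<in> WJ" using W_comp[OF v1'(1) u2(2)] .
  have u21: "u2 = u1 \<circ> ?y"
  proof -
    have "u1 \<circ> ?y = x \<circ> (v1 \<circ> v1') \<circ> v2" using u1(3) by (simp add: comp_assoc)
    then show ?thesis using v1'(3) u2(3) by simp
  qed
  have u1W: "u1 \<in> W" using u1(1) by (simp add: min_reps_def)
  have I1: "Inv u1 \<subseteq> P" and I2: "Inv u2 \<subseteq> P" using min_reps_Inv u1(1) u2(1) by auto
  have "Inv ?y = {}"
  proof (rule ccontr)
    assume "Inv ?y \<noteq> {}"
    then obtain \<delta> where d: "\<delta> \<in> pos" "?y \<delta> \<notin> pos" by (auto simp: Inv_def)
    have dR: "\<delta> \<in> R" using posR[OF d(1)] .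
    have "\<delta> \<notin> P" using WJ_P[OF yJ dR] P_pos d(2) by blast
    then have z: "\<Lambda> \<bullet> \<delta> = 0" using pos_lam[OF d(1)] dR by (auto simp: P_def)
    have yR: "?y \<delta> \<in> R" using W_R[OF WJW[OF yJ] dR] .
    have my: "- ?y \<delta> \<in> pos" using neg_iff[OF yR] d(2) by blast
    have "\<Lambda> \<bullet> (- ?y \<delta>) = 0" using WJ_lam[OF yJ] z by simp
    then have "- ?y \<delta> \<notin> P" by (simp add: P_def)
    then have "- ?y \<delta> \<notin> Inv u1" using I1 by blast
    then have "u1 (- ?y \<delta>) \<in> pos" using my by (simp add: Inv_def)
    then have "u1 (?y \<delta>) \<notin> pos" using orth_uminus[OF W_orth[OF u1W]] not_both by metis
    then have "\<delta> \<in> Inv u2" using u21 d(1) by (simp add: Inv_def)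
    then show False using I2 \<open>\<delta> \<notin> P\<close> by blast
  qed
  then have "?y = id" using Inv_empty_id[OF WJW[OF yJ]] by blast
  then show ?thesis using u21 by simp
qed

lemma wfloor_eq: assumes x: "x \<in> W" and u: "u \<in> min_reps \<alpha> I0 J" "v \<in> WJ" "u = x \<circ> v"
  shows "wfloor \<alpha> I0 J x = u"
  unfolding wfloor_def
proof (rule the_equality)
  show "u \<in> min_reps \<alpha> I0 J \<and> (\<exists>v\<in>WJ. u = x \<circ> v)" using u by blast
next
  fix u' assume "u' \<in> min_reps \<alpha> I0 J \<and> (\<exists>v\<in>WJ. u' = x \<circ> v)"
  then obtain v' where "u' \<in> min_reps \<alpha> I0 J" "v' \<in> WJ" "u' = x \<circ> v'" by blast
  then show "u' = u" using floor_unique[OF x _ _ _ u] by blast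
qed

lemma wfloor_props: assumes x: "x \<in> W"
  shows "wfloor \<alpha> I0 J x \<in> min_reps \<alpha> I0 J \<and> (\<exists>v\<in>WJ. wfloor \<alpha> I0 J x = x \<circ> v)"
proof -
  obtain u v where uv: "u \<in> min_reps \<alpha> I0 J" "v\<in>WJ" "u = x \<circ> v" using floor_exists[OF x] by blast
  have "wfloor \<alpha> I0 J x = u" by (rule wfloor_eq[OF x uv])
  then show ?thesis using uv by blast
qed

lemma wfloor_comp: assumes x: "x \<in> W" and v: "v \<in> WJ" shows "wfloor \<alpha> I0 J (x \<circ> v) = wfloor \<alpha> I0 J x"
proof -
  obtain v0 where v0: "v0 \<in> WJ" "wfloor \<alpha> I0 J x = x \<circ> v0" and m: "wfloor \<alpha> I0 J x \<in> min_reps \<alpha> I0 J"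
    using wfloor_props[OF x] by blast
  obtain v' where v': "v' \<in> WJ" "v' \<circ> v = id" "v \<circ> v' = id" using W_inv[OF JI v] by blast
  have "(x \<circ> v) \<circ> (v' \<circ> v0) = x \<circ> (v \<circ> v') \<circ> v0" by (simp only: comp_assoc)
  also have "\<dots> = x \<circ> v0" using v'(3) by simp
  finally have "x \<circ> v0 = (x \<circ> v) \<circ> (v' \<circ> v0)" by simp
  then have eq: "wfloor \<alpha> I0 J x = (x \<circ> v) \<circ> (v' \<circ> v0)" by (rule trans[OF v0(2)])
  show ?thesis by (rule wfloor_eq[OF W_comp[OF x WJW[OF v]] m W_comp[OF v'(1) v0(1)] eq])
qed

lemma wlen_floor: assumes x: "x \<in> W" shows "wlen \<alpha> I0 (wfloor \<alpha> I0 J x) = N x"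
proof -
  obtain v0 where v0: "v0 \<in> WJ" "wfloor \<alpha> I0 J x = x \<circ> v0" and m: "wfloor \<alpha> I0 J x \<in> min_reps \<alpha> I0 J"
    using wfloor_props[OF x] by blast
  have W': "wfloor \<alpha> I0 J x \<in> W" using m by (simp add: min_reps_def)
  have "wlen \<alpha> I0 (wfloor \<alpha> I0 J x) = card (Inv (wfloor \<alpha> I0 J x))" using wlen_Inv[OF W'] .
  also have "\<dots> = N (wfloor \<alpha> I0 J x)" using Inv_P_N min_reps_Inv[OF m] by blast
  also have "\<dots> = N x" using v0 N_comp by simp
  finally show ?thesis .
qed

lemma min_reps_floor: assumes w: "w \<in> min_reps \<alpha> I0 J" shows "wfloor \<alpha> I0 J w = w"
  using wfloor_eq[of w w id] w W_id by (simp add: min_reps_def)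

end

context prs begin

definition S :: 'a where "S = (\<Sum>\<delta>\<in>P. \<delta>)"
definition Aset :: "'a \<Rightarrow> 'a set" where "Aset \<beta> = {\<delta>\<in>P. refl \<beta> \<delta> \<notin> P}"

lemma ind_card: "finite X \<Longrightarrow> real (card {\<delta>\<in>X. Q \<delta>}) = (\<Sum>\<delta>\<in>X. if Q \<delta> then 1 else 0)"
  using sum.inter_filter[of X "\<lambda>_. (1::real)" Q] by simp

lemma A_sub: "Aset \<beta> \<subseteq> P" by (auto simp: Aset_def)
lemma finA: "finite (Aset \<beta>)" using finite_subset[OF A_sub finP] .
lemma P_lam: "\<delta> \<in> P \<Longrightarrow> 0 < \<Lambda> \<bullet> \<delta>" by (simp add: P_def)
lemma P_nz: "\<delta> \<in> P \<Longrightarrow> \<delta> \<noteq> 0" using P_R nz by blast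

lemma beta_A: assumes b: "\<beta> \<in> P" shows "\<beta> \<in> Aset \<beta>"
proof -
  have "refl \<beta> \<beta> = - \<beta>" using refl_self[OF P_nz[OF b]] .
  then have "refl \<beta> \<beta> \<notin> P" using P_lam[OF b] by (auto simp: P_def)
  then show ?thesis using b by (simp add: Aset_def)
qed

lemma lam_refl: "\<Lambda> \<bullet> refl \<beta> \<delta> = \<Lambda> \<bullet> \<delta> - coroot_pair \<delta> \<beta> * (\<Lambda> \<bullet> \<beta>)"
  by (simp add: refl_def inner_diff_right)

lemma A_cp: assumes b: "\<beta> \<in> P" and d: "\<delta> \<in> Aset \<beta>" shows "1 \<le> coroot_pair \<delta> \<beta>"
proof -
  have dP: "\<delta> \<in> P" and nP: "refl \<beta> \<delta> \<notin> P" using d by (auto simp: Aset_def)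
  have "refl \<beta> \<delta> \<in> R" using reflR[OF P_R[OF b] P_R[OF dP]] .
  then have "\<Lambda> \<bullet> refl \<beta> \<delta> \<le> 0" using nP by (auto simp: P_def)
  then have le: "\<Lambda> \<bullet> \<delta> \<le> coroot_pair \<delta> \<beta> * (\<Lambda> \<bullet> \<beta>)" using lam_refl by simp
  have "0 < coroot_pair \<delta> \<beta>"
  proof (rule ccontr)
    assume "\<not> 0 < coroot_pair \<delta> \<beta>"
    then have "coroot_pair \<delta> \<beta> * (\<Lambda> \<bullet> \<beta>) \<le> 0" using P_lam[OF b]
      by (simp add: mult_nonpos_nonneg)
    then show False using le P_lam[OF dP] by simp
  qed
  moreover obtain t where "coroot_pair \<delta> \<beta> = of_int t" using cpZ'[OF P_R[OF b] P_R[OF dP]] by blast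
  ultimately show ?thesis by simp
qed

lemma cp_refl_self: "\<beta> \<noteq> 0 \<Longrightarrow> coroot_pair (refl \<beta> \<delta>) \<beta> = - coroot_pair \<delta> \<beta>"
  by (simp add: refl_def cp_diff cp_scale cp_self)

lemma PA_refl: assumes b: "\<beta> \<in> P" and d: "\<delta> \<in> P - Aset \<beta>" shows "refl \<beta> \<delta> \<in> P - Aset \<beta>"
proof -
  have r: "refl \<beta> \<delta> \<in> P" using d by (auto simp: Aset_def)
  have "refl \<beta> (refl \<beta> \<delta>) \<in> P" using refl_refl[OF P_nz[OF b]] d by simp
  then show ?thesis using r by (simp add: Aset_def)
qed

lemma PA_bij: assumes b: "\<beta> \<in> P" shows "bij_betw (refl \<beta>) (P - Aset \<beta>) (P - Aset \<beta>)"
  unfolding bij_betw_def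
proof
  show "inj_on (refl \<beta>) (P - Aset \<beta>)"
    using orth_inj[OF orth_refl[OF P_nz[OF b]]] by (simp add: inj_on_def inj_def)
  show "refl \<beta> ` (P - Aset \<beta>) = P - Aset \<beta>"
  proof (intro equalityI subsetI)
    fix x assume "x \<in> refl \<beta> ` (P - Aset \<beta>)" then show "x \<in> P - Aset \<beta>" using PA_refl[OF b] by blast
  next
    fix x assume x: "x \<in> P - Aset \<beta>"
    have "x = refl \<beta> (refl \<beta> x)" using refl_refl[OF P_nz[OF b]] by simp
    then show "x \<in> refl \<beta> ` (P - Aset \<beta>)" using PA_refl[OF b x] by blast
  qed
qed

lemma S_cp: assumes b: "\<beta> \<in> P" shows "coroot_pair S \<beta> = (\<Sum>\<delta>\<in>Aset \<beta>. coroot_pair \<delta> \<beta>)"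
proof -
  have "coroot_pair S \<beta> = (\<Sum>\<delta>\<in>P. coroot_pair \<delta> \<beta>)" unfolding S_def by (rule cp_sum)
  also have "\<dots> = (\<Sum>\<delta>\<in>P \<inter> Aset \<beta>. coroot_pair \<delta> \<beta>) + (\<Sum>\<delta>\<in>P - Aset \<beta>. coroot_pair \<delta> \<beta>)"
    by (rule sum.Int_Diff[OF finP])
  also have "P \<inter> Aset \<beta> = Aset \<beta>" using A_sub by blast
  also have "(\<Sum>\<delta>\<in>P - Aset \<beta>. coroot_pair \<delta> \<beta>) = 0"
  proof -
    have "(\<Sum>\<delta>\<in>P - Aset \<beta>. coroot_pair (refl \<beta> \<delta>) \<beta>) = (\<Sum>\<delta>\<in>P - Aset \<beta>. coroot_pair \<delta> \<beta>)"
      by (rule sum.reindex_bij_betw[OF PA_bij[OF b]])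
    moreover have "(\<Sum>\<delta>\<in>P - Aset \<beta>. coroot_pair (refl \<beta> \<delta>) \<beta>) = - (\<Sum>\<delta>\<in>P - Aset \<beta>. coroot_pair \<delta> \<beta>)"
      using cp_refl_self[OF P_nz[OF b]] by (simp add: sum_negf)
    ultimately show ?thesis by simp
  qed
  finally show ?thesis by simp
qed

definition fA :: "('a \<Rightarrow> 'a) \<Rightarrow> 'a \<Rightarrow> 'a \<Rightarrow> real" where
  "fA x \<beta> \<delta> = (if x (refl \<beta> \<delta>) \<notin> pos then 1 else 0) - (if x \<delta> \<notin> pos then 1 else 0)"

lemma N_diff: assumes b: "\<beta> \<in> P"
  shows "real (N (x \<circ> refl \<beta>)) - real (N x) = (\<Sum>\<delta>\<in>Aset \<beta>. fA x \<beta> \<delta>)"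
proof -
  let ?i1 = "\<lambda>\<delta>. if x (refl \<beta> \<delta>) \<notin> pos then 1 else (0::real)"
  let ?i2 = "\<lambda>\<delta>. if x \<delta> \<notin> pos then 1 else (0::real)"
  have PA: "P \<inter> Aset \<beta> = Aset \<beta>" using A_sub by blast
  have n1: "real (N (x \<circ> refl \<beta>)) = (\<Sum>\<delta>\<in>Aset \<beta>. ?i1 \<delta>) + (\<Sum>\<delta>\<in>P - Aset \<beta>. ?i1 \<delta>)"
    unfolding N_def using ind_card[OF finP, of "\<lambda>\<delta>. x (refl \<beta> \<delta>) \<notin> pos"] sum.Int_Diff[OF finP, of ?i1 "Aset \<beta>"] PA
    by simp
  have n2: "real (N x) = (\<Sum>\<delta>\<in>Aset \<beta>. ?i2 \<delta>) + (\<Sum>\<delta>\<in>P - Aset \<beta>. ?i2 \<delta>)"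
    unfolding N_def using ind_card[OF finP, of "\<lambda>\<delta>. x \<delta> \<notin> pos"] sum.Int_Diff[OF finP, of ?i2 "Aset \<beta>"] PA
    by simp
  have "(\<Sum>\<delta>\<in>P - Aset \<beta>. ?i1 \<delta>) = (\<Sum>\<delta>\<in>P - Aset \<beta>. ?i2 \<delta>)"
    by (rule sum.reindex_bij_betw[OF PA_bij[OF b], of ?i2])
  then show ?thesis using n1 n2 unfolding fA_def by (simp add: sum_subtractf)
qed

lemma not_ge0_neg: "v \<in> pos \<Longrightarrow> \<not> ge0 (-v)"
  using ge0_antisym pos_iff nz by blast

lemma W_refl_apply: assumes x: "x \<in> W"
  shows "x (refl \<beta> \<delta>) = x \<delta> - coroot_pair \<delta> \<beta> *\<^sub>R x \<beta>"
  unfolding refl_def using orth_diff[OF W_orth[OF x]] orth_scale[OF W_orth[OF x]] by simp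

lemma Q_ge: assumes x: "x \<in> W" and b: "\<beta> \<in> P"
  shows "real (N (x \<circ> refl \<beta>)) - real (N x) + coroot_pair S \<beta> = fA x \<beta> \<beta> + coroot_pair \<beta> \<beta> +
          (\<Sum>\<delta>\<in>Aset \<beta> - {\<beta>}. fA x \<beta> \<delta> + coroot_pair \<delta> \<beta>)"
proof -
  have "real (N (x \<circ> refl \<beta>)) - real (N x) + coroot_pair S \<beta> = (\<Sum>\<delta>\<in>Aset \<beta>. fA x \<beta> \<delta> + coroot_pair \<delta> \<beta>)"
    using N_diff[OF b, of x] S_cp[OF b] by (simp add: sum.distrib)
  also have "\<dots> = fA x \<beta> \<beta> + coroot_pair \<beta> \<beta> + (\<Sum>\<delta>\<in>Aset \<beta> - {\<beta>}. fA x \<beta> \<delta> + coroot_pair \<delta> \<beta>)"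
    by (rule sum.remove[OF finA beta_A[OF b]])
  finally show ?thesis .
qed

lemma fA_ge: "fA x \<beta> \<delta> \<ge> -1" by (simp add: fA_def)

lemma Q1: assumes x: "x \<in> W" and b: "\<beta> \<in> P"
  shows "real (N (x \<circ> refl \<beta>)) - real (N x) + coroot_pair S \<beta> \<ge> 1"
proof -
  have "(\<Sum>\<delta>\<in>Aset \<beta> - {\<beta>}. fA x \<beta> \<delta> + coroot_pair \<delta> \<beta>) \<ge> 0"
    using A_cp[OF b] fA_ge by (intro sum_nonneg) (smt (verit) DiffD1)
  moreover have "coroot_pair \<beta> \<beta> = 2" using cp_self[OF P_nz[OF b]] .
  ultimately show ?thesis using Q_ge[OF x b] fA_ge[of x \<beta> \<beta>] by simp
qed

lemma Q2: assumes x: "x \<in> W" and b: "\<beta> \<in> P"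
  and eq: "real (N (x \<circ> refl \<beta>)) - real (N x) + coroot_pair S \<beta> = 1"
  and d: "\<delta> \<in> Aset \<beta>"
  shows "x \<delta> \<notin> pos \<and> x (refl \<beta> \<delta>) \<in> pos \<and> (\<delta> \<noteq> \<beta> \<longrightarrow> coroot_pair \<delta> \<beta> = 1)"
proof -
  let ?g = "\<lambda>\<delta>. fA x \<beta> \<delta> + coroot_pair \<delta> \<beta>"
  have nn: "\<And>\<delta>. \<delta> \<in> Aset \<beta> - {\<beta>} \<Longrightarrow> 0 \<le> ?g \<delta>"
    using A_cp[OF b] fA_ge by (smt (verit) DiffD1)
  have s0: "(\<Sum>\<delta>\<in>Aset \<beta> - {\<beta>}. ?g \<delta>) \<ge> 0" using nn by (intro sum_nonneg) simp
  have c2: "coroot_pair \<beta> \<beta> = 2" using cp_self[OF P_nz[OF b]] .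
  have gb: "fA x \<beta> \<beta> = -1" using Q_ge[OF x b] eq s0 c2 fA_ge[of x \<beta> \<beta>] by simp
  have s1: "(\<Sum>\<delta>\<in>Aset \<beta> - {\<beta>}. ?g \<delta>) = 0" using Q_ge[OF x b] eq c2 gb by simp
  show ?thesis
  proof (cases "\<delta> = \<beta>")
    case True
    then show ?thesis using gb by (simp add: fA_def split: if_splits)
  next
    case False
    then have dA: "\<delta> \<in> Aset \<beta> - {\<beta>}" using d by blast
    have "?g \<delta> = 0" using sum_nonneg_0[OF _ nn s1 dA] finA by simp
    moreover have "coroot_pair \<delta> \<beta> \<ge> 1" using A_cp[OF b d] .
    ultimately show ?thesis using False fA_ge[of x \<beta> \<delta>] by (simp add: fA_def split: if_splits)
  qed
qed

lemma E1: assumes x: "x \<in> W" and b: "\<beta> \<in> P" and xb: "x \<beta> \<in> pos"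
  shows "N x + 1 \<le> N (x \<circ> refl \<beta>)"
proof -
  have fb: "fA x \<beta> \<beta> = 1"
  proof -
    have "x (refl \<beta> \<beta>) = - x \<beta>" using refl_self[OF P_nz[OF b]] orth_uminus[OF W_orth[OF x]] by simp
    then have "x (refl \<beta> \<beta>) \<notin> pos" using not_both[OF xb] by simp
    then show ?thesis using xb by (simp add: fA_def)
  qed
  have nn: "\<And>\<delta>. \<delta> \<in> Aset \<beta> - {\<beta>} \<Longrightarrow> 0 \<le> fA x \<beta> \<delta>"
  proof -
    fix \<delta> assume "\<delta> \<in> Aset \<beta> - {\<beta>}"
    then have d: "\<delta> \<in> Aset \<beta>" by blast
    then have dP: "\<delta> \<in> P" using A_sub by blast
    show "0 \<le> fA x \<beta> \<delta>"
    proof (cases "x \<delta> \<in> pos")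
      case True then show ?thesis by (simp add: fA_def)
    next
      case False
      obtain t where t: "coroot_pair \<delta> \<beta> = of_int t" using cpZ'[OF P_R[OF b] P_R[OF dP]] by blast
      have t1: "0 \<le> t" using A_cp[OF b d] t by simp
      have xdR: "x \<delta> \<in> R" using W_R[OF x P_R[OF dP]] .
      have "ge0 (- x \<delta>)" using neg_iff2[OF xdR] False by blast
      moreover have "ge0 (of_int t *\<^sub>R x \<beta>)" using ge0_scale[OF _ t1] xb pos_iff by blast
      ultimately have "ge0 (- x \<delta> + of_int t *\<^sub>R x \<beta>)" by (rule ge0_add)
      moreover have "- x (refl \<beta> \<delta>) = - x \<delta> + of_int t *\<^sub>R x \<beta>" using W_refl_apply[OF x] t by simp
      ultimately have "x (refl \<beta> \<delta>) \<notin> pos" using not_ge0_neg by metis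
      then show ?thesis by (simp add: fA_def)
    qed
  qed
  have "real (N (x \<circ> refl \<beta>)) - real (N x) = fA x \<beta> \<beta> + (\<Sum>\<delta>\<in>Aset \<beta> - {\<beta>}. fA x \<beta> \<delta>)"
    using N_diff[OF b, of x] sum.remove[OF finA beta_A[OF b], of "fA x \<beta>"] by simp
  moreover have "(\<Sum>\<delta>\<in>Aset \<beta> - {\<beta>}. fA x \<beta> \<delta>) \<ge> 0" using nn by (intro sum_nonneg) simp
  ultimately show ?thesis using fb by simp
qed

end

locale prst = prs R I0 \<alpha> \<Lambda> m J for R :: "'a::euclidean_space set" and I0 :: "'i set" and \<alpha> \<Lambda> m J +
  fixes \<theta> :: 'a
  assumes hr: "highest_root R I0 \<alpha> \<theta>"
begin

lemma thR: "\<theta> \<in> R" using hr by (simp add: highest_root_def)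
lemma th_hi: "b \<in> R \<Longrightarrow> ge0 (\<theta> - b)" using hr by (auto simp: highest_root_def ge0_def)
lemma thnz: "\<theta> \<noteq> 0" using nz thR by blast

lemma th_pos: "\<theta> \<in> pos"
proof (rule ccontr)
  assume "\<theta> \<notin> pos"
  then have mp: "-\<theta> \<in> pos" using neg_iff thR by blast
  have g1: "ge0 (\<theta> - (-\<theta>))" using th_hi[OF negR[OF thR]] .
  have "ge0 (of_int 2 *\<^sub>R (-\<theta>))" using ge0_scale[of "-\<theta>" 2] mp pos_iff by simp
  moreover have "of_int 2 *\<^sub>R (-\<theta>) = - (\<theta> - (-\<theta>))" by (simp add: scaleR_2)
  ultimately have "\<theta> - (-\<theta>) = 0" using ge0_antisym g1 by metis
  then show False using thnz by (simp add: scaleR_2[symmetric])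
qed

lemma th_dom: assumes i: "i \<in> I0" shows "0 \<le> \<theta> \<bullet> \<alpha> i"
proof (rule ccontr)
  assume "\<not> 0 \<le> \<theta> \<bullet> \<alpha> i"
  then have neg: "\<theta> \<bullet> \<alpha> i < 0" by simp
  obtain t where t: "coroot_pair \<theta> (\<alpha> i) = of_int t" using cpZ'[OF aR[OF i] thR] by blast
  have "coroot_pair \<theta> (\<alpha> i) < 0" using cp_sign[OF anz[OF i]] neg by blast
  then have tn: "t < 0" using t by simp
  have bR: "refl (\<alpha> i) \<theta> \<in> R" using reflR[OF aR[OF i] thR] .
  have eq: "\<theta> - refl (\<alpha> i) \<theta> = of_int t *\<^sub>R \<alpha> i" by (simp add: refl_def t)
  have g1: "ge0 (of_int t *\<^sub>R \<alpha> i)" using th_hi[OF bR] eq by simp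
  have "ge0 (of_int (-t) *\<^sub>R \<alpha> i)" using ge0_scale[of "\<alpha> i" "-t"] a_pos[OF i] pos_iff tn by simp
  then have "ge0 (- (of_int t *\<^sub>R \<alpha> i))" by simp
  then have "of_int t *\<^sub>R \<alpha> i = 0" using ge0_antisym g1 by blast
  then show False using tn anz[OF i] by simp
qed

lemma ge0_theta: assumes "ge0 v" shows "0 \<le> v \<bullet> \<theta>"
proof -
  obtain c where c: "\<forall>i\<in>I0. 0 \<le> c i" "v = rcomb I0 \<alpha> c" using assms ge0_def by blast
  have "v \<bullet> \<theta> = \<theta> \<bullet> rcomb I0 \<alpha> c" using c(2) by (simp add: inner_commute)
  also have "\<dots> = (\<Sum>i\<in>I0. of_int (c i) * (\<theta> \<bullet> \<alpha> i))"
    unfolding rcomb_def by (simp add: inner_sum_right)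
  finally have "v \<bullet> \<theta> = (\<Sum>i\<in>I0. of_int (c i) * (\<theta> \<bullet> \<alpha> i))" .
  also have "\<dots> \<ge> 0" using c(1) th_dom by (intro sum_nonneg) simp
  finally show ?thesis .
qed

lemma pos_theta: "\<eta> \<in> pos \<Longrightarrow> 0 \<le> \<eta> \<bullet> \<theta>" using ge0_theta pos_iff by blast

lemma theta_pos_root: "\<eta> \<in> R \<Longrightarrow> 0 < \<eta> \<bullet> \<theta> \<Longrightarrow> \<eta> \<in> pos"
proof (rule ccontr)
  assume "\<eta> \<in> R" "0 < \<eta> \<bullet> \<theta>" "\<eta> \<notin> pos"
  then have "-\<eta> \<in> pos" using neg_iff by blast
  then have "0 \<le> (-\<eta>) \<bullet> \<theta>" by (rule pos_theta)
  then show False using \<open>0 < \<eta> \<bullet> \<theta>\<close> by simp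
qed

lemma theta_neg_root: "\<eta> \<in> R \<Longrightarrow> \<eta> \<bullet> \<theta> < 0 \<Longrightarrow> \<eta> \<notin> pos"
  using pos_theta by fastforce

lemma cp_ge2: assumes e: "\<eta> \<in> R" and k: "coroot_pair \<eta> \<theta> = of_int k" "2 \<le> k" shows "\<eta> = \<theta>"
proof -
  have r: "refl \<theta> \<eta> = \<eta> - of_int k *\<^sub>R \<theta>" by (simp add: refl_def k)
  have "- refl \<theta> \<eta> \<in> R" using negR[OF reflR[OF thR e]] .
  then have g1: "ge0 (\<theta> - (- refl \<theta> \<eta>))" by (rule th_hi)
  have g2: "ge0 (\<theta> - \<eta>)" using th_hi[OF e] .
  have "ge0 ((\<theta> - \<eta>) + (\<theta> - (- refl \<theta> \<eta>)))" using ge0_add[OF g2 g1] .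
  moreover have "(\<theta> - \<eta>) + (\<theta> - (- refl \<theta> \<eta>)) = of_int (2 - k) *\<^sub>R \<theta>"
    using r by (simp add: algebra_simps scaleR_2)
  ultimately have g3: "ge0 (of_int (2 - k) *\<^sub>R \<theta>)" by simp
  show ?thesis
  proof (cases "k = 2")
    case True
    have "\<theta> - (- refl \<theta> \<eta>) = - (\<theta> - \<eta>)" using r True by (simp add: algebra_simps scaleR_2)
    then have "\<theta> - \<eta> = 0" using ge0_antisym g1 g2 by metis
    then show ?thesis by simp
  next
    case False
    then have k3: "0 \<le> k - 2" using k by simp
    have "ge0 (of_int (k - 2) *\<^sub>R \<theta>)" using ge0_scale[OF _ k3] th_pos pos_iff by blast
    moreover have "of_int (2 - k) *\<^sub>R \<theta> = - (of_int (k - 2) *\<^sub>R \<theta>)" by (simp add: algebra_simps)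
    ultimately have "of_int (k - 2) *\<^sub>R \<theta> = 0" using ge0_antisym g3 by metis
    then show ?thesis using False thnz by simp
  qed
qed

lemma cp_theta_bound: assumes e: "\<eta> \<in> R" "\<eta> \<noteq> \<theta>" "\<eta> \<noteq> - \<theta>"
  shows "coroot_pair \<eta> \<theta> = -1 \<or> coroot_pair \<eta> \<theta> = 0 \<or> coroot_pair \<eta> \<theta> = 1"
proof -
  obtain k where k: "coroot_pair \<eta> \<theta> = of_int k" using cpZ'[OF thR e(1)] by blast
  have "\<not> 2 \<le> k" using cp_ge2[OF e(1) k] e(2) by blast
  moreover have "\<not> k \<le> -2"
  proof
    assume "k \<le> -2"
    have c: "coroot_pair (-\<eta>) \<theta> = of_int (-k)" using k by (simp add: cp_uminus)
    have "2 \<le> -k" using \<open>k \<le> -2\<close> by simp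
    then have "-\<eta> = \<theta>" using cp_ge2[OF negR[OF e(1)] c] by simp
    then have "\<eta> = - \<theta>" by (metis minus_minus)
    then show False using e(3) by blast
  qed
  ultimately have "k = -1 \<or> k = 0 \<or> k = 1" by auto
  then show ?thesis using k by auto
qed

lemma refl_th_inner: "refl \<theta> \<eta> \<bullet> \<theta> = - (\<eta> \<bullet> \<theta>)"
  using refl_inner_swap[OF thnz, of \<eta> \<theta>] refl_self[OF thnz] by simp

lemma rth_W: "refl \<theta> \<in> W" using refl_W[OF thR] .

definition Pp :: "('a \<Rightarrow> 'a) \<Rightarrow> nat" where "Pp y = card {\<delta>\<in>P. 0 < y \<delta> \<bullet> \<theta>}"
definition Pn :: "('a \<Rightarrow> 'a) \<Rightarrow> nat" where "Pn y = card {\<delta>\<in>P. y \<delta> \<bullet> \<theta> < 0}"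

lemma N_rth: assumes y: "y \<in> W" shows "N (refl \<theta> \<circ> y) + Pn y = N y + Pp y"
proof -
  let ?A0 = "{\<delta>\<in>P. y \<delta> \<notin> pos \<and> y \<delta> \<bullet> \<theta> = 0}"
  let ?Pp = "{\<delta>\<in>P. 0 < y \<delta> \<bullet> \<theta>}"
  let ?Pn = "{\<delta>\<in>P. y \<delta> \<bullet> \<theta> < 0}"
  have yR: "\<And>\<delta>. \<delta> \<in> P \<Longrightarrow> y \<delta> \<in> R" using W_R[OF y] P_R by blast
  have e1: "{\<delta>\<in>P. (refl \<theta> \<circ> y) \<delta> \<notin> pos} = ?A0 \<union> ?Pp"
  proof (intro equalityI subsetI)
    fix \<delta> assume "\<delta> \<in> {\<delta>\<in>P. (refl \<theta> \<circ> y) \<delta> \<notin> pos}"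
    then have d: "\<delta> \<in> P" "refl \<theta> (y \<delta>) \<notin> pos" by auto
    have "y \<delta> \<bullet> \<theta> \<ge> 0"
    proof (rule ccontr)
      assume "\<not> ?thesis"
      then have "0 < refl \<theta> (y \<delta>) \<bullet> \<theta>" using refl_th_inner by simp
      then show False using theta_pos_root[OF reflR[OF thR yR[OF d(1)]]] d(2) by blast
    qed
    moreover have "y \<delta> \<bullet> \<theta> = 0 \<Longrightarrow> y \<delta> \<notin> pos"
    proof -
      assume "y \<delta> \<bullet> \<theta> = 0"
      then have "refl \<theta> (y \<delta>) = y \<delta>" by (simp add: refl_def coroot_pair_def)
      then show "y \<delta> \<notin> pos" using d(2) by simp
    qed
    ultimately show "\<delta> \<in> ?A0 \<union> ?Pp" using d(1) by force
  next
    fix \<delta> assume "\<delta> \<in> ?A0 \<union> ?Pp"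
    then show "\<delta> \<in> {\<delta>\<in>P. (refl \<theta> \<circ> y) \<delta> \<notin> pos}"
    proof
      assume "\<delta> \<in> ?A0"
      then have "refl \<theta> (y \<delta>) = y \<delta>" "\<delta> \<in> P" "y \<delta> \<notin> pos" by (auto simp: refl_def coroot_pair_def)
      then show ?thesis by simp
    next
      assume "\<delta> \<in> ?Pp"
      then have d: "\<delta> \<in> P" "0 < y \<delta> \<bullet> \<theta>" by auto
      then have "refl \<theta> (y \<delta>) \<bullet> \<theta> < 0" using refl_th_inner by simp
      then have "refl \<theta> (y \<delta>) \<notin> pos" using theta_neg_root[OF reflR[OF thR yR[OF d(1)]]] by blast
      then show ?thesis using d by simp
    qed
  qed
  have e2: "{\<delta>\<in>P. y \<delta> \<notin> pos} = ?A0 \<union> ?Pn"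
  proof (intro equalityI subsetI)
    fix \<delta> assume "\<delta> \<in> {\<delta>\<in>P. y \<delta> \<notin> pos}"
    then have d: "\<delta> \<in> P" "y \<delta> \<notin> pos" by auto
    have "\<not> 0 < y \<delta> \<bullet> \<theta>" using theta_pos_root[OF yR[OF d(1)]] d(2) by blast
    then show "\<delta> \<in> ?A0 \<union> ?Pn" using d by force
  next
    fix \<delta> assume "\<delta> \<in> ?A0 \<union> ?Pn"
    then show "\<delta> \<in> {\<delta>\<in>P. y \<delta> \<notin> pos}" using theta_neg_root yR by blast
  qed
  have fin: "finite ?A0" "finite ?Pp" "finite ?Pn" using finP by auto
  have "N (refl \<theta> \<circ> y) = card ?A0 + card ?Pp"
    unfolding N_def e1 by (rule card_Un_disjoint[OF fin(1,2)]) auto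
  moreover have "N y = card ?A0 + card ?Pn"
    unfolding N_def e2 by (rule card_Un_disjoint[OF fin(1,3)]) auto
  ultimately show ?thesis unfolding Pp_def Pn_def by simp
qed

definition ind :: "'a \<Rightarrow> ('a \<Rightarrow> 'a) \<Rightarrow> real" where "ind v y = (if \<exists>\<delta>\<in>P. y \<delta> = v then 1 else 0)"

lemma sum_ind: assumes y: "y \<in> W" shows "(\<Sum>\<delta>\<in>P. if y \<delta> = v then 1 else 0) = ind v y"
proof (cases "\<exists>\<delta>\<in>P. y \<delta> = v")
  case True
  then obtain \<delta>0 where d0: "\<delta>0 \<in> P" "y \<delta>0 = v" by blast
  have "(\<Sum>\<delta>\<in>P. if y \<delta> = v then 1 else (0::real)) = (\<Sum>\<delta>\<in>P. if \<delta> = \<delta>0 then 1 else 0)"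
  proof (rule sum.cong[OF refl])
    fix \<delta> assume "\<delta> \<in> P"
    have "y \<delta> = v \<longleftrightarrow> \<delta> = \<delta>0" using d0(2) orth_inj[OF W_orth[OF y]] by (auto simp: inj_def)
    then show "(if y \<delta> = v then 1 else (0::real)) = (if \<delta> = \<delta>0 then 1 else 0)" by simp
  qed
  also have "\<dots> = 1" using d0(1) finP by (simp add: sum.delta)
  finally show ?thesis using True by (simp add: ind_def)
next
  case False then show ?thesis by (simp add: ind_def)
qed

lemma D_formula: assumes y: "y \<in> W"
  shows "real (N (refl \<theta> \<circ> y)) - real (N y) = coroot_pair (y S) \<theta> - ind \<theta> y + ind (-\<theta>) y"
proof -
  have yR: "\<And>\<delta>. \<delta> \<in> P \<Longrightarrow> y \<delta> \<in> R" using W_R[OF y] P_R by blast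
  have tt: "\<theta> \<bullet> \<theta> > 0" using thnz by simp
  have tn: "\<theta> \<noteq> - \<theta>"
  proof
    assume h: "\<theta> = - \<theta>"
    have "\<theta> \<bullet> \<theta> = - (\<theta> \<bullet> \<theta>)" using arg_cong[OF h, of "\<lambda>v. \<theta> \<bullet> v"] by simp
    then show False using tt by simp
  qed
  have pt: "(if 0 < y \<delta> \<bullet> \<theta> then 1 else 0) - (if y \<delta> \<bullet> \<theta> < 0 then 1 else (0::real))
      = coroot_pair (y \<delta>) \<theta> - (if y \<delta> = \<theta> then 1 else 0) + (if y \<delta> = -\<theta> then 1 else 0)"
    if "\<delta> \<in> P" for \<delta>
  proof -
    consider "y \<delta> = \<theta>" | "y \<delta> = -\<theta>" | "y \<delta> \<noteq> \<theta> \<and> y \<delta> \<noteq> -\<theta>" by blast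
    then show ?thesis
    proof cases
      case 1 then show ?thesis using tn thnz cp_self[OF thnz] by (simp add: inner_ge_zero not_less)
    next
      case 2 then show ?thesis using tn thnz cp_self[OF thnz] by (simp add: cp_uminus inner_ge_zero not_less)
    next
      case 3
      then have b: "coroot_pair (y \<delta>) \<theta> = -1 \<or> coroot_pair (y \<delta>) \<theta> = 0 \<or> coroot_pair (y \<delta>) \<theta> = 1"
        using cp_theta_bound[OF yR[OF that]] by blast
      have s: "(coroot_pair (y \<delta>) \<theta> > 0 \<longleftrightarrow> y \<delta> \<bullet> \<theta> > 0) \<and> (coroot_pair (y \<delta>) \<theta> < 0 \<longleftrightarrow> y \<delta> \<bullet> \<theta> < 0)"
        using cp_sign[OF thnz] by blast
      show ?thesis using 3 b s by auto
    qed
  qed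
  have "real (Pp y) - real (Pn y) = (\<Sum>\<delta>\<in>P. (if 0 < y \<delta> \<bullet> \<theta> then 1 else 0) - (if y \<delta> \<bullet> \<theta> < 0 then 1 else (0::real)))"
    unfolding Pp_def Pn_def using ind_card[OF finP] by (simp add: sum_subtractf)
  also have "\<dots> = (\<Sum>\<delta>\<in>P. coroot_pair (y \<delta>) \<theta> - (if y \<delta> = \<theta> then 1 else 0) + (if y \<delta> = -\<theta> then 1 else 0))"
    by (rule sum.cong[OF refl pt])
  also have "\<dots> = (\<Sum>\<delta>\<in>P. coroot_pair (y \<delta>) \<theta>) - (\<Sum>\<delta>\<in>P. if y \<delta> = \<theta> then 1 else 0) + (\<Sum>\<delta>\<in>P. if y \<delta> = -\<theta> then 1 else 0)"
    by (simp add: sum.distrib sum_subtractf)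
  also have "(\<Sum>\<delta>\<in>P. coroot_pair (y \<delta>) \<theta>) = coroot_pair (y S) \<theta>"
    unfolding S_def orth_sum[OF W_orth[OF y]] by (rule cp_sum[symmetric])
  finally have "real (Pp y) - real (Pn y) = coroot_pair (y S) \<theta> - ind \<theta> y + ind (-\<theta>) y"
    using sum_ind[OF y] by simp
  moreover have "real (N (refl \<theta> \<circ> y) + Pn y) = real (N y + Pp y)"
    using N_rth[OF y] by simp
  then have "real (N (refl \<theta> \<circ> y)) + real (Pn y) = real (N y) + real (Pp y)" by simp
  ultimately show ?thesis by simp
qed

lemma cS_pos: assumes b: "\<beta> \<in> P" shows "2 \<le> coroot_pair S \<beta>"
proof -
  have "coroot_pair S \<beta> = coroot_pair \<beta> \<beta> + (\<Sum>\<delta>\<in>Aset \<beta> - {\<beta>}. coroot_pair \<delta> \<beta>)"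
    using S_cp[OF b] sum.remove[OF finA beta_A[OF b]] by simp
  moreover have "(\<Sum>\<delta>\<in>Aset \<beta> - {\<beta>}. coroot_pair \<delta> \<beta>) \<ge> 0"
    using A_cp[OF b] by (intro sum_nonneg) (smt (verit) DiffD1)
  ultimately show ?thesis using cp_self[OF P_nz[OF b]] by simp
qed

end

context prst begin

lemma rho_S: "2 * coroot_pair (rho R I0 \<alpha> - rho_J R I0 \<alpha> J) b = coroot_pair S b"
proof -
  have sub: "pos_roots_J R I0 \<alpha> J \<subseteq> pos" by (auto simp: pos_roots_J_def)
  have "rho R I0 \<alpha> - rho_J R I0 \<alpha> J = (1/2) *\<^sub>R ((\<Sum>b\<in>pos. b) - (\<Sum>b\<in>pos_roots_J R I0 \<alpha> J. b))"
    by (simp add: rho_def rho_J_def scaleR_diff_right)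
  also have "(\<Sum>b\<in>pos. b) - (\<Sum>b\<in>pos_roots_J R I0 \<alpha> J. b) = (\<Sum>b\<in>pos - pos_roots_J R I0 \<alpha> J. b)"
    by (rule sum_diff[OF finpos sub, symmetric])
  also have "\<dots> = S" unfolding S_def P_eq ..
  finally show ?thesis by (simp add: cp_scale)
qed

lemma a0_pos: "alpha0_pair \<theta> v > 0 \<longleftrightarrow> v \<bullet> \<theta> < 0"
  using cp_sign[OF thnz, of v] by (auto simp: alpha0_pair_def)
lemma a0_neg: "alpha0_pair \<theta> v < 0 \<longleftrightarrow> v \<bullet> \<theta> > 0"
  using cp_sign[OF thnz, of v] by (auto simp: alpha0_pair_def)
lemma a0_nonpos: "alpha0_pair \<theta> v \<le> 0 \<longleftrightarrow> v \<bullet> \<theta> \<ge> 0"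
  using a0_pos[of v] by linarith
lemma a0_nonneg: "alpha0_pair \<theta> v \<ge> 0 \<longleftrightarrow> v \<bullet> \<theta> \<le> 0"
  using a0_neg[of v] by linarith

lemma key: assumes w: "w \<in> W" and b: "\<beta> \<in> P"
  and qu: "real (N (w \<circ> refl \<beta>)) - real (N w) + coroot_pair S \<beta> = 1"
  and g: "\<gamma> \<in> R" "w \<gamma> = \<theta>" and s: "w \<beta> \<bullet> \<theta> < 0" and nm: "w \<beta> \<noteq> - \<theta>"
  and p: "\<Lambda> \<bullet> \<gamma> \<le> 0"
  shows "\<Lambda> \<bullet> refl \<beta> \<gamma> < 0"
proof -
  have bR: "\<beta> \<in> R" using P_R[OF b] .
  have bnz: "\<beta> \<noteq> 0" using P_nz[OF b] .
  have wbR: "w \<beta> \<in> R" using W_R[OF w bR] .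
  have tt: "\<theta> \<bullet> \<theta> > 0" using thnz by simp
  have nt: "w \<beta> \<noteq> \<theta>"
  proof
    assume "w \<beta> = \<theta>"
    then have "\<theta> \<bullet> \<theta> < 0" using s by simp
    then show False using tt by simp
  qed
  have c: "coroot_pair (w \<beta>) \<theta> = -1"
  proof -
    have "coroot_pair (w \<beta>) \<theta> < 0" using cp_sign[OF thnz] s by blast
    then show ?thesis using cp_theta_bound[OF wbR nt nm] by auto
  qed
  have cgb: "coroot_pair \<gamma> \<beta> = coroot_pair \<theta> (w \<beta>)" using orth_cp[OF W_orth[OF w]] g(2) by metis
  have cgbn: "coroot_pair \<gamma> \<beta> < 0"
  proof -
    have "\<theta> \<bullet> w \<beta> < 0" using s by (simp add: inner_commute)
    moreover have "w \<beta> \<noteq> 0" using nz[OF wbR] .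
    ultimately show ?thesis using cgb cp_sign by metis
  qed
  have claim: "coroot_pair \<gamma> \<beta> = -1 \<Longrightarrow> w (refl \<beta> \<gamma>) \<in> pos"
  proof -
    assume h: "coroot_pair \<gamma> \<beta> = -1"
    have e: "w (refl \<beta> \<gamma>) = \<theta> + w \<beta>" using W_refl_apply[OF w] g(2) h by simp
    have "coroot_pair (\<theta> + w \<beta>) \<theta> = 1" using c cp_self[OF thnz] by (simp add: cp_add)
    then have "0 < (\<theta> + w \<beta>) \<bullet> \<theta>" using cp_sign[OF thnz] by (metis zero_less_one)
    moreover have "w (refl \<beta> \<gamma>) \<in> R" using W_R[OF w reflR[OF bR g(1)]] .
    ultimately show ?thesis using theta_pos_root e by metis
  qed
  have rneg: "refl \<beta> (- \<gamma>) = - refl \<beta> \<gamma>" by (simp add: refl_def cp_uminus)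
  show ?thesis
  proof (cases "\<Lambda> \<bullet> \<gamma> < 0")
    case True
    show ?thesis
    proof (rule ccontr)
      assume "\<not> \<Lambda> \<bullet> refl \<beta> \<gamma> < 0"
      then have q: "0 \<le> \<Lambda> \<bullet> refl \<beta> \<gamma>" by simp
      have dP: "- \<gamma> \<in> P" using True negR[OF g(1)] by (simp add: P_def)
      have "\<Lambda> \<bullet> refl \<beta> (- \<gamma>) \<le> 0" using q rneg by simp
      then have "refl \<beta> (- \<gamma>) \<notin> P" by (auto simp: P_def)
      then have dA: "- \<gamma> \<in> Aset \<beta>" using dP by (simp add: Aset_def)
      have dne: "- \<gamma> \<noteq> \<beta>"
      proof
        assume "- \<gamma> = \<beta>"
        then have "w \<beta> = - w \<gamma>" using orth_uminus[OF W_orth[OF w]] by metis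
        then show False using nm g(2) by simp
      qed
      have Q: "w (-\<gamma>) \<notin> pos \<and> w (refl \<beta> (-\<gamma>)) \<in> pos \<and> coroot_pair (-\<gamma>) \<beta> = 1"
        using Q2[OF w b qu dA] dne by blast
      then have "coroot_pair \<gamma> \<beta> = -1" by (simp add: cp_uminus)
      then have "w (refl \<beta> \<gamma>) \<in> pos" by (rule claim)
      moreover have "w (refl \<beta> (-\<gamma>)) = - w (refl \<beta> \<gamma>)" using rneg orth_uminus[OF W_orth[OF w]] by simp
      ultimately show False using Q not_both by metis
    qed
  next
    case False
    then have p0: "\<Lambda> \<bullet> \<gamma> = 0" using p by simp
    have "\<Lambda> \<bullet> refl \<beta> \<gamma> = - (coroot_pair \<gamma> \<beta> * (\<Lambda> \<bullet> \<beta>))" using lam_refl p0 by simp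
    moreover have "coroot_pair \<gamma> \<beta> * (\<Lambda> \<bullet> \<beta>) < 0" using cgbn P_lam[OF b] by (simp add: mult_neg_pos)
    ultimately have qpos: "0 < \<Lambda> \<bullet> refl \<beta> \<gamma>" by simp
    have dP: "refl \<beta> \<gamma> \<in> P" using qpos reflR[OF bR g(1)] by (simp add: P_def)
    have rr: "refl \<beta> (refl \<beta> \<gamma>) = \<gamma>" using refl_refl[OF bnz] .
    have "refl \<beta> (refl \<beta> \<gamma>) \<notin> P" using rr p0 by (simp add: P_def)
    then have dA: "refl \<beta> \<gamma> \<in> Aset \<beta>" using dP by (simp add: Aset_def)
    have dne: "refl \<beta> \<gamma> \<noteq> \<beta>"
    proof
      assume h: "refl \<beta> \<gamma> = \<beta>"
      have "\<gamma> = refl \<beta> \<beta>" using arg_cong[OF h, of "refl \<beta>"] rr by simp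
      then have "\<gamma> = - \<beta>" using refl_self[OF bnz] by simp
      then have "w \<gamma> = - w \<beta>" using orth_uminus[OF W_orth[OF w]] by simp
      then show False using nm g(2) by (metis minus_minus)
    qed
    have Q: "w (refl \<beta> \<gamma>) \<notin> pos \<and> coroot_pair (refl \<beta> \<gamma>) \<beta> = 1"
      using Q2[OF w b qu dA] dne by blast
    then have "coroot_pair \<gamma> \<beta> = -1" using cp_refl_self[OF bnz] by simp
    then have "w (refl \<beta> \<gamma>) \<in> pos" by (rule claim)
    then show ?thesis using Q by blast
  qed
qed

lemma ind_lemma: assumes y: "y \<in> W" and g: "\<gamma> \<in> R" "y \<gamma> = \<theta>"
  shows "ind \<theta> y = (if 0 < \<Lambda> \<bullet> \<gamma> then 1 else 0) \<and> ind (-\<theta>) y = (if \<Lambda> \<bullet> \<gamma> < 0 then 1 else 0)"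
proof -
  have inj: "inj y" using orth_inj[OF W_orth[OF y]] .
  have a: "(\<exists>\<delta>\<in>P. y \<delta> = \<theta>) \<longleftrightarrow> \<gamma> \<in> P"
    using g inj by (auto simp: inj_def)
  have ym: "y (-\<gamma>) = -\<theta>" using orth_uminus[OF W_orth[OF y]] g(2) by simp
  have b: "(\<exists>\<delta>\<in>P. y \<delta> = -\<theta>) \<longleftrightarrow> -\<gamma> \<in> P"
  proof
    assume "\<exists>\<delta>\<in>P. y \<delta> = -\<theta>"
    then obtain \<delta> where d: "\<delta> \<in> P" "y \<delta> = -\<theta>" by blast
    then have "y \<delta> = y (-\<gamma>)" using ym by simp
    then have "\<delta> = -\<gamma>" by (rule injD[OF inj])
    then show "-\<gamma> \<in> P" using d by simp
  next
    assume "-\<gamma> \<in> P" then show "\<exists>\<delta>\<in>P. y \<delta> = -\<theta>" using ym by blast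
  qed
  show ?thesis unfolding ind_def using a b g(1) negR[OF g(1)] by (auto simp: P_def)
qed

lemma z_S: assumes z: "z \<in> WJ" shows "z S = S"
proof -
  have "z S = (\<Sum>\<delta>\<in>P. z \<delta>)" unfolding S_def by (rule orth_sum[OF W_orth[OF WJW[OF z]]])
  also have "\<dots> = (\<Sum>\<delta>\<in>z ` P. \<delta>)"
    using sum.reindex[of z P "\<lambda>x. x"] orth_inj[OF W_orth[OF WJW[OF z]]] by (simp add: inj_on_def inj_def)
  also have "z ` P = P" by (rule WJ_image[OF z])
  finally show ?thesis unfolding S_def .
qed

end

context prst begin

lemma main:
  assumes edge: "qbg_edge R I0 \<alpha> J w \<beta> (wfloor \<alpha> I0 J (w \<circ> refl \<beta>))"
    and z: "z \<in> weyl_sub \<alpha> J"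
    and zdec: "refl \<theta> \<circ> w = wfloor \<alpha> I0 J (refl \<theta> \<circ> w) \<circ> z"
  shows
    "(alpha0_pair \<theta> (w \<Lambda>) > 0 \<and> w \<beta> \<noteq> \<theta> \<and> w \<beta> \<noteq> - \<theta> \<longrightarrow>
        alpha0_pair \<theta> ((w \<circ> refl \<beta>) \<Lambda>) > 0
        \<and> qbg_edge R I0 \<alpha> J (wfloor \<alpha> I0 J (refl \<theta> \<circ> w)) (z \<beta>)
            (wfloor \<alpha> I0 J (refl \<theta> \<circ> w \<circ> refl \<beta>)))
   \<and> (alpha0_pair \<theta> ((w \<circ> refl \<beta>) \<Lambda>) < 0 \<and> w \<beta> \<noteq> \<theta> \<and> w \<beta> \<noteq> - \<theta> \<longrightarrow>
        alpha0_pair \<theta> (w \<Lambda>) < 0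
        \<and> qbg_edge R I0 \<alpha> J (wfloor \<alpha> I0 J (refl \<theta> \<circ> w)) (z \<beta>)
            (wfloor \<alpha> I0 J (refl \<theta> \<circ> w \<circ> refl \<beta>)))
   \<and> (alpha0_pair \<theta> ((w \<circ> refl \<beta>) \<Lambda>) < 0 \<and> alpha0_pair \<theta> (w \<Lambda>) \<ge> 0 \<longrightarrow>
        w \<beta> = \<theta> \<or> w \<beta> = - \<theta>)
   \<and> (alpha0_pair \<theta> ((w \<circ> refl \<beta>) \<Lambda>) \<le> 0 \<and> alpha0_pair \<theta> (w \<Lambda>) > 0 \<longrightarrow>
        w \<beta> = \<theta> \<or> w \<beta> = - \<theta>)"
proof -
  have wm: "w \<in> min_reps \<alpha> I0 J" and bPP: "\<beta> \<in> pos - pos_roots_J R I0 \<alpha> J"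
    and cond: "wlen \<alpha> I0 (wfloor \<alpha> I0 J (w \<circ> refl \<beta>)) = wlen \<alpha> I0 w + 1
        \<or> real (wlen \<alpha> I0 (wfloor \<alpha> I0 J (w \<circ> refl \<beta>))) = real (wlen \<alpha> I0 w)
             - 2 * coroot_pair (rho R I0 \<alpha> - rho_J R I0 \<alpha> J) \<beta> + 1"
    using edge unfolding qbg_edge_def by blast+
  have bP: "\<beta> \<in> P" using bPP P_eq by simp
  have wW: "w \<in> W" using wm by (simp add: min_reps_def)
  have bR: "\<beta> \<in> R" using P_R[OF bP] .
  have bnz: "\<beta> \<noteq> 0" using P_nz[OF bP] .
  have wbW: "w \<circ> refl \<beta> \<in> W" using W_comp[OF wW refl_W[OF bR]] .
  have wbR: "w \<beta> \<in> R" using W_R[OF wW bR] .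
  have wbnz: "w \<beta> \<noteq> 0" using nz[OF wbR] .
  have lw: "wlen \<alpha> I0 w = N w" using wlen_floor[OF wW] min_reps_floor[OF wm] by simp
  have lwb: "wlen \<alpha> I0 (wfloor \<alpha> I0 J (w \<circ> refl \<beta>)) = N (w \<circ> refl \<beta>)" using wlen_floor[OF wbW] .
  define cS where "cS = coroot_pair S \<beta>"
  have rhob: "2 * coroot_pair (rho R I0 \<alpha> - rho_J R I0 \<alpha> J) \<beta> = cS" using rho_S cS_def by simp
  have cS2: "2 \<le> cS" using cS_pos[OF bP] cS_def by simp
  have cond': "real (N (w \<circ> refl \<beta>)) = real (N w) + 1 \<or> real (N (w \<circ> refl \<beta>)) - real (N w) + cS = 1"
    using cond lw lwb rhob by auto
  have br_pos: "w \<beta> \<in> pos" if br: "real (N (w \<circ> refl \<beta>)) = real (N w) + 1"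
  proof (rule ccontr)
    assume nb: "w \<beta> \<notin> pos"
    have "(w \<circ> refl \<beta>) \<beta> = - w \<beta>" using refl_self[OF bnz] orth_uminus[OF W_orth[OF wW]] by simp
    then have yb: "(w \<circ> refl \<beta>) \<beta> \<in> pos" using nb neg_iff[OF wbR] by simp
    have "N (w \<circ> refl \<beta>) + 1 \<le> N ((w \<circ> refl \<beta>) \<circ> refl \<beta>)" using E1[OF wbW bP yb] .
    moreover have "(w \<circ> refl \<beta>) \<circ> refl \<beta> = w" using refl_refl[OF bnz] by (simp add: fun_eq_iff)
    ultimately show False using br by simp
  qed
  have qu_neg: "w \<beta> \<notin> pos" if qu: "real (N (w \<circ> refl \<beta>)) - real (N w) + cS = 1"
  proof
    assume "w \<beta> \<in> pos"
    then have "N w + 1 \<le> N (w \<circ> refl \<beta>)" using E1[OF wW bP] by blast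
    then show False using qu cS2 by simp
  qed
  obtain \<gamma> where g: "\<gamma> \<in> R" "w \<gamma> = \<theta>" using W_surj[OF wW thR] by blast
  have hp: "w \<Lambda> \<bullet> \<theta> = \<Lambda> \<bullet> \<gamma>" using orth_inner[OF W_orth[OF wW]] g(2) by metis
  have hq: "(w \<circ> refl \<beta>) \<Lambda> \<bullet> \<theta> = \<Lambda> \<bullet> refl \<beta> \<gamma>"
  proof -
    have "(w \<circ> refl \<beta>) \<Lambda> \<bullet> \<theta> = w (refl \<beta> \<Lambda>) \<bullet> w \<gamma>" using g(2) by simp
    also have "\<dots> = refl \<beta> \<Lambda> \<bullet> \<gamma>" by (rule orth_inner[OF W_orth[OF wW]])
    also have "\<dots> = \<Lambda> \<bullet> refl \<beta> \<gamma>" by (rule refl_inner_swap[OF bnz])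
    finally show ?thesis .
  qed
  have hpq: "\<Lambda> \<bullet> refl \<beta> \<gamma> = \<Lambda> \<bullet> \<gamma> - coroot_pair \<gamma> \<beta> * (\<Lambda> \<bullet> \<beta>)" by (rule lam_refl)
  have hcg: "coroot_pair \<gamma> \<beta> = coroot_pair \<theta> (w \<beta>)" using orth_cp[OF W_orth[OF wW]] g(2) by metis
  have kpos: "0 < \<Lambda> \<bullet> \<beta>" using P_lam[OF bP] .
  have X: False if nm: "w \<beta> \<noteq> - \<theta>" and p: "\<Lambda> \<bullet> \<gamma> \<le> 0" and q: "0 \<le> \<Lambda> \<bullet> refl \<beta> \<gamma>"
     and pq: "\<Lambda> \<bullet> \<gamma> < \<Lambda> \<bullet> refl \<beta> \<gamma>"
  proof -
    have "coroot_pair \<gamma> \<beta> * (\<Lambda> \<bullet> \<beta>) < 0" using hpq pq by simp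
    then have "coroot_pair \<gamma> \<beta> < 0" using kpos by (simp add: mult_less_0_iff)
    then have "\<theta> \<bullet> w \<beta> < 0" using hcg cp_sign[OF wbnz] by metis
    then have s: "w \<beta> \<bullet> \<theta> < 0" by (simp add: inner_commute)
    then have "w \<beta> \<notin> pos" using theta_neg_root[OF wbR] by blast
    then have "\<not> real (N (w \<circ> refl \<beta>)) = real (N w) + 1" using br_pos by blast
    then have qu: "real (N (w \<circ> refl \<beta>)) - real (N w) + coroot_pair S \<beta> = 1" using cond' cS_def by simp
    have "\<Lambda> \<bullet> refl \<beta> \<gamma> < 0" using key[OF wW bP qu g s nm p] .
    then show False using q by simp
  qed
  have EG: "qbg_edge R I0 \<alpha> J (wfloor \<alpha> I0 J (refl \<theta> \<circ> w)) (z \<beta>) (wfloor \<alpha> I0 J (refl \<theta> \<circ> w \<circ> refl \<beta>))"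
    if nt: "w \<beta> \<noteq> \<theta>" and nm: "w \<beta> \<noteq> - \<theta>"
    and sg: "(\<Lambda> \<bullet> \<gamma> < 0 \<and> \<Lambda> \<bullet> refl \<beta> \<gamma> < 0) \<or> (0 < \<Lambda> \<bullet> \<gamma> \<and> 0 < \<Lambda> \<bullet> refl \<beta> \<gamma>)"
  proof -
    have zW: "z \<in> W" using WJW[OF z] .
    have zo: "orth z" using W_orth[OF zW] .
    have rwW: "refl \<theta> \<circ> w \<in> W" using W_comp[OF rth_W wW] .
    define u where "u = wfloor \<alpha> I0 J (refl \<theta> \<circ> w)"
    have um: "u \<in> min_reps \<alpha> I0 J" using wfloor_props[OF rwW] u_def by blast
    have uW: "u \<in> W" using um by (simp add: min_reps_def)
    have zbP: "z \<beta> \<in> P" using WJ_P[OF z bR] bP by blast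
    have zbR: "z \<beta> \<in> R" using P_R[OF zbP] .
    have zconj: "refl (z \<beta>) \<circ> z = z \<circ> refl \<beta>"
      by (rule ext) (simp add: orth_conj[OF zo])
    have eqX: "refl \<theta> \<circ> w \<circ> refl \<beta> = (u \<circ> refl (z \<beta>)) \<circ> z"
    proof -
      have "refl \<theta> \<circ> w \<circ> refl \<beta> = (u \<circ> z) \<circ> refl \<beta>" using zdec u_def by simp
      also have "\<dots> = u \<circ> (z \<circ> refl \<beta>)" by (simp add: comp_assoc)
      also have "\<dots> = u \<circ> (refl (z \<beta>) \<circ> z)" using zconj by simp
      finally show ?thesis by (simp add: comp_assoc)
    qed
    have XW: "u \<circ> refl (z \<beta>) \<in> W" using W_comp[OF uW refl_W[OF zbR]] .
    have fl: "wfloor \<alpha> I0 J (refl \<theta> \<circ> w \<circ> refl \<beta>) = wfloor \<alpha> I0 J (u \<circ> refl (z \<beta>))"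
      using wfloor_comp[OF XW z] eqX by simp
    have l1: "wlen \<alpha> I0 u = N (refl \<theta> \<circ> w)" using wlen_floor[OF rwW] u_def by simp
    have l2: "wlen \<alpha> I0 (wfloor \<alpha> I0 J (u \<circ> refl (z \<beta>))) = N (refl \<theta> \<circ> w \<circ> refl \<beta>)"
      using wlen_floor[OF XW] N_comp[OF z, of "u \<circ> refl (z \<beta>)"] eqX by simp
    have cSz: "coroot_pair S (z \<beta>) = cS" using orth_cp[OF zo, of S \<beta>] z_S[OF z] cS_def by simp
    have D1: "real (N (refl \<theta> \<circ> w)) - real (N w) = coroot_pair (w S) \<theta> - ind \<theta> w + ind (-\<theta>) w"
      using D_formula[OF wW] .
    have D2: "real (N (refl \<theta> \<circ> w \<circ> refl \<beta>)) - real (N (w \<circ> refl \<beta>)) =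
        coroot_pair ((w \<circ> refl \<beta>) S) \<theta> - ind \<theta> (w \<circ> refl \<beta>) + ind (-\<theta>) (w \<circ> refl \<beta>)"
      using D_formula[OF wbW] by (simp add: comp_assoc)
    have I1: "ind \<theta> w = (if 0 < \<Lambda> \<bullet> \<gamma> then 1 else 0) \<and> ind (-\<theta>) w = (if \<Lambda> \<bullet> \<gamma> < 0 then 1 else 0)"
      using ind_lemma[OF wW g] .
    have "(w \<circ> refl \<beta>) (refl \<beta> \<gamma>) = \<theta>" using refl_refl[OF bnz] g(2) by simp
    then have I2: "ind \<theta> (w \<circ> refl \<beta>) = (if 0 < \<Lambda> \<bullet> refl \<beta> \<gamma> then 1 else 0)
        \<and> ind (-\<theta>) (w \<circ> refl \<beta>) = (if \<Lambda> \<bullet> refl \<beta> \<gamma> < 0 then 1 else 0)"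
      using ind_lemma[OF wbW reflR[OF bR g(1)]] by blast
    have ieq: "ind \<theta> (w \<circ> refl \<beta>) = ind \<theta> w \<and> ind (-\<theta>) (w \<circ> refl \<beta>) = ind (-\<theta>) w"
      using I1 I2 sg by auto
    define c where "c = coroot_pair (w \<beta>) \<theta>"
    have cpS: "coroot_pair ((w \<circ> refl \<beta>) S) \<theta> = coroot_pair (w S) \<theta> - cS * c"
      using W_refl_apply[OF wW, of \<beta> S] cS_def c_def by (simp add: cp_diff cp_scale)
    have dd: "real (N (refl \<theta> \<circ> w \<circ> refl \<beta>)) - real (N (refl \<theta> \<circ> w))
        = real (N (w \<circ> refl \<beta>)) - real (N w) - cS * c"
      using D1 D2 ieq cpS by simp
    have cb: "c = -1 \<or> c = 0 \<or> c = 1" using cp_theta_bound[OF wbR nt nm] c_def by simp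
    have diff: "real (N (refl \<theta> \<circ> w \<circ> refl \<beta>)) - real (N (refl \<theta> \<circ> w)) = 1 \<or>
        real (N (refl \<theta> \<circ> w \<circ> refl \<beta>)) - real (N (refl \<theta> \<circ> w)) = 1 - cS"
    proof (cases "real (N (w \<circ> refl \<beta>)) = real (N w) + 1")
      case True
      then have "w \<beta> \<in> pos" by (rule br_pos)
      then have "0 \<le> w \<beta> \<bullet> \<theta>" by (rule pos_theta)
      then have "0 \<le> c" using cp_sign[OF thnz, of "w \<beta>"] c_def by linarith
      then have "c = 0 \<or> c = 1" using cb by auto
      then show ?thesis using dd True by auto
    next
      case False
      then have qu: "real (N (w \<circ> refl \<beta>)) - real (N w) + cS = 1" using cond' by simp
      then have "w \<beta> \<notin> pos" by (rule qu_neg)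
      then have "- w \<beta> \<in> pos" using neg_iff[OF wbR] by blast
      then have "0 \<le> (- w \<beta>) \<bullet> \<theta>" by (rule pos_theta)
      then have "c \<le> 0" using cp_sign[OF thnz, of "w \<beta>"] c_def by simp
      then have "c = 0 \<or> c = -1" using cb by auto
      then show ?thesis using dd qu by auto
    qed
    have zbPP: "z \<beta> \<in> pos - pos_roots_J R I0 \<alpha> J" using zbP P_eq by simp
    have rz: "2 * coroot_pair (rho R I0 \<alpha> - rho_J R I0 \<alpha> J) (z \<beta>) = cS" using rho_S cSz by simp
    have lenc: "wlen \<alpha> I0 (wfloor \<alpha> I0 J (refl \<theta> \<circ> w \<circ> refl \<beta>)) = wlen \<alpha> I0 u + 1
        \<or> real (wlen \<alpha> I0 (wfloor \<alpha> I0 J (refl \<theta> \<circ> w \<circ> refl \<beta>))) = real (wlen \<alpha> I0 u)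
             - 2 * coroot_pair (rho R I0 \<alpha> - rho_J R I0 \<alpha> J) (z \<beta>) + 1"
      using diff l1 l2 fl rz by auto
    show ?thesis unfolding qbg_edge_def using um zbPP fl lenc u_def by blast
  qed
  show ?thesis
  proof (intro conjI impI)
    assume h: "0 < alpha0_pair \<theta> (w \<Lambda>) \<and> w \<beta> \<noteq> \<theta> \<and> w \<beta> \<noteq> - \<theta>"
    then have p: "\<Lambda> \<bullet> \<gamma> < 0" using a0_pos hp by simp
    have q: "\<Lambda> \<bullet> refl \<beta> \<gamma> < 0"
    proof (rule ccontr)
      assume "\<not> ?thesis" then show False using X h p by simp
    qed
    show "0 < alpha0_pair \<theta> ((w \<circ> refl \<beta>) \<Lambda>)" using a0_pos hq q by simp
    show "qbg_edge R I0 \<alpha> J (wfloor \<alpha> I0 J (refl \<theta> \<circ> w)) (z \<beta>) (wfloor \<alpha> I0 J (refl \<theta> \<circ> w \<circ> refl \<beta>))"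
      using EG h p q by blast
  next
    assume h: "alpha0_pair \<theta> ((w \<circ> refl \<beta>) \<Lambda>) < 0 \<and> w \<beta> \<noteq> \<theta> \<and> w \<beta> \<noteq> - \<theta>"
    then have q: "0 < \<Lambda> \<bullet> refl \<beta> \<gamma>" using a0_neg hq by simp
    have p: "0 < \<Lambda> \<bullet> \<gamma>"
    proof (rule ccontr)
      assume "\<not> ?thesis" then show False using X h q by simp
    qed
    show "alpha0_pair \<theta> (w \<Lambda>) < 0" using a0_neg hp p by simp
    show "qbg_edge R I0 \<alpha> J (wfloor \<alpha> I0 J (refl \<theta> \<circ> w)) (z \<beta>) (wfloor \<alpha> I0 J (refl \<theta> \<circ> w \<circ> refl \<beta>))"
      using EG h p q by blast
  next
    assume h: "alpha0_pair \<theta> ((w \<circ> refl \<beta>) \<Lambda>) < 0 \<and> 0 \<le> alpha0_pair \<theta> (w \<Lambda>)"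
    then have q: "0 < \<Lambda> \<bullet> refl \<beta> \<gamma>" and p: "\<Lambda> \<bullet> \<gamma> \<le> 0" using a0_neg a0_nonneg hp hq by auto
    show "w \<beta> = \<theta> \<or> w \<beta> = - \<theta>"
    proof (rule ccontr)
      assume "\<not> ?thesis" then show False using X p q by simp
    qed
  next
    assume h: "alpha0_pair \<theta> ((w \<circ> refl \<beta>) \<Lambda>) \<le> 0 \<and> 0 < alpha0_pair \<theta> (w \<Lambda>)"
    then have q: "0 \<le> \<Lambda> \<bullet> refl \<beta> \<gamma>" and p: "\<Lambda> \<bullet> \<gamma> < 0" using a0_pos a0_nonpos hp hq by auto
    show "w \<beta> = \<theta> \<or> w \<beta> = - \<theta>"
    proof (rule ccontr)
      assume "\<not> ?thesis" then show False using X p q by simp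
    qed
  qed
qed

end

theorem lemma4p5:
  fixes R :: "'a::euclidean_space set" and I0 J :: "'i set" and \<alpha> :: "'i \<Rightarrow> 'a"
    and \<theta> \<Lambda> \<beta> :: 'a and m :: "'i \<Rightarrow> nat" and w z :: "'a \<Rightarrow> 'a"
  assumes rs: "root_system R" and irr: "irreducible_rs R"
    and simple: "simple_system R I0 \<alpha>" and hr: "highest_root R I0 \<alpha> \<theta>"
    and lam: "\<forall>i\<in>I0. coroot_pair \<Lambda> (\<alpha> i) = real (m i)"
    and J_def: "J = {j\<in>I0. coroot_pair \<Lambda> (\<alpha> j) = 0}"
    and edge: "qbg_edge R I0 \<alpha> J w \<beta> (wfloor \<alpha> I0 J (w \<circ> refl \<beta>))"
    and z: "z \<in> weyl_sub \<alpha> J"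
    and zdec: "refl \<theta> \<circ> w = wfloor \<alpha> I0 J (refl \<theta> \<circ> w) \<circ> z"
  shows
    "(alpha0_pair \<theta> (w \<Lambda>) > 0 \<and> w \<beta> \<noteq> \<theta> \<and> w \<beta> \<noteq> - \<theta> \<longrightarrow>
        alpha0_pair \<theta> ((w \<circ> refl \<beta>) \<Lambda>) > 0
        \<and> qbg_edge R I0 \<alpha> J (wfloor \<alpha> I0 J (refl \<theta> \<circ> w)) (z \<beta>)
            (wfloor \<alpha> I0 J (refl \<theta> \<circ> w \<circ> refl \<beta>)))
   \<and> (alpha0_pair \<theta> ((w \<circ> refl \<beta>) \<Lambda>) < 0 \<and> w \<beta> \<noteq> \<theta> \<and> w \<beta> \<noteq> - \<theta> \<longrightarrow>
        alpha0_pair \<theta> (w \<Lambda>) < 0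
        \<and> qbg_edge R I0 \<alpha> J (wfloor \<alpha> I0 J (refl \<theta> \<circ> w)) (z \<beta>)
            (wfloor \<alpha> I0 J (refl \<theta> \<circ> w \<circ> refl \<beta>)))
   \<and> (alpha0_pair \<theta> ((w \<circ> refl \<beta>) \<Lambda>) < 0 \<and> alpha0_pair \<theta> (w \<Lambda>) \<ge> 0 \<longrightarrow>
        w \<beta> = \<theta> \<or> w \<beta> = - \<theta>)
   \<and> (alpha0_pair \<theta> ((w \<circ> refl \<beta>) \<Lambda>) \<le> 0 \<and> alpha0_pair \<theta> (w \<Lambda>) > 0 \<longrightarrow>
        w \<beta> = \<theta> \<or> w \<beta> = - \<theta>)"
proof -
  interpret P: prst R I0 \<alpha> \<Lambda> m J \<theta>
    apply unfold_locales
    using rs simple lam J_def hr by auto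
  show ?thesis by (rule P.main[OF edge z zdec])
qed

end
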